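(* Fix integers $N,d\ge1$, a function $v:\{0,1\}^N\to\{0,1\}$ and non-negative weights $(q^{(a)}_{\mathbf{x}})$, defined for $a=v(\mathbf{x})$, with $\sum_{\mathbf{x}}q^{(v(\mathbf{x}))}_{\mathbf{x}}=1$. For a density operator $\rho$ on $\mathbb{C}^N\otimes\mathbb{C}^d$ and a family of controlled unitaries $U_{\mathbf{x}}=\sum_{j=1}^N|j\rangle\langle j|\otimes U_j^{(x_j)}$ (with arbitrary unitaries $U_j^{(0)},U_j^{(1)}$ on $\mathbb{C}^d$), let $$P_W(\rho,U_{\mathbf{x}})=\max_{\{\Pi_0,\Pi_1\}}\Big(\sum_{v(\mathbf{x})=1}q^{(1)}_{\mathbf{x}}\mathrm{Tr}[\Pi_1U_{\mathbf{x}}\rho U_{\mathbf{x}}^\dagger]+\sum_{v(\mathbf{x})=0}q^{(0)}_{\mathbf{x}}\mathrm{Tr}[\Pi_0U_{\mathbf{x}}\rho U_{\mathbf{x}}^\dagger]\Big),$$ the maximum taken over two-outcome POVMs $\{\Pi_0,\Pi_1\}$ on $\mathbb{C}^N\otimes\mathbb{C}^d$. Then the maximum of $P_W(\rho,U_{\mathbf{x}})$ over all such pairs $(\rho,U_{\mathbf{x}})$ can be obtained by a pair of the form $\rho=|\psi\rangle\langle\psi|$ with $|\psi\rangle=\sum_{i=1}^N\sqrt{p_i}\,|i\rangle|\chi\rangle$ for some unit vector $|\chi\rangle\in\mathbb{C}^d$ and some $p_i\ge0$ with $\sum_ip_i=1$, and $U_{\mathbf{x}}=\sum_{i=1}^N|i\rangle\langle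 i|\otimes (U_i)^{x_i}$ for some list of unitaries $(U_1,\dots,U_N)$ on $\mathbb{C}^d$ (so the unitary applied at location $i$ is the identity when $x_i=0$ and $U_i$ when $x_i=1$).
   Context: $\{|1\rangle,\dots,|N\rangle\}$ is the standard orthonormal basis of $\mathbb{C}^N$, modeling $N$ spatial paths of a single particle with a $d$-dimensional internal degree of freedom; bits $x_j$ control the local unitary applied on path $j$. *)

theory Defs
  imports Complex_Main "Jordan_Normal_Form.Matrix"
begin

text \<open>Finite-dimensional quantum notions on complex matrices (JNF 'complex mat').
  The space C^N (x) C^d is C^(N*d), basis vector |j>|a> (j<N, a<d) being index j*d + a.\<close>

definition adj :: "complex mat \<Rightarrow> complex mat" where
  "adj A = mat (dim_col A) (dim_row A) (\<lambda>(i,j). cnj (A $$ (j,i)))"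

definition tr :: "complex mat \<Rightarrow> complex" where
  "tr A = (\<Sum>i<dim_row A. A $$ (i,i))"

definition psd :: "nat \<Rightarrow> complex mat \<Rightarrow> bool" where
  "psd n A \<longleftrightarrow> A \<in> carrier_mat n n \<and>
     (\<forall>w \<in> carrier_vec n. let z = (\<Sum>i<n. cnj (w $ i) * (A *\<^sub>v w) $ i) in Im z = 0 \<and> Re z \<ge> 0)"

definition density :: "nat \<Rightarrow> complex mat \<Rightarrow> bool" where
  "density n \<rho> \<longleftrightarrow> psd n \<rho> \<and> tr \<rho> = 1"

definition unitary_mat :: "nat \<Rightarrow> complex mat \<Rightarrow> bool" where
  "unitary_mat d U \<longleftrightarrow> U \<in> carrier_mat d d \<and> adj U * U = 1\<^sub>m d \<and> U * adj U = 1\<^sub>m d"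

definition povm2 :: "nat \<Rightarrow> complex mat \<Rightarrow> complex mat \<Rightarrow> bool" where
  "povm2 n P0 P1 \<longleftrightarrow> psd n P0 \<and> psd n P1 \<and> P0 + P1 = 1\<^sub>m n"

text \<open>Bit strings x in {0,1}^N, as boolean lists of length N (True = bit 1).\<close>
definition bitstrings :: "nat \<Rightarrow> bool list set" where
  "bitstrings N = {xs. length xs = N}"

text \<open>Controlled unitary U_x = sum_j |j><j| (x) Us j (x_j), where Us j b is U_j^(b).\<close>
definition ctrl :: "nat \<Rightarrow> nat \<Rightarrow> (nat \<Rightarrow> bool \<Rightarrow> complex mat) \<Rightarrow> bool list \<Rightarrow> complex mat" where
  "ctrl N d Us x = mat (N*d) (N*d) (\<lambda>(r,c).
     if r div d = c div d then Us (r div d) (x ! (r div d)) $$ (r mod d, c mod d) else 0)"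

text \<open>Winning probability for a fixed POVM; v x = True means v(x) = 1.\<close>
definition win_prob :: "nat \<Rightarrow> nat \<Rightarrow> (bool list \<Rightarrow> bool) \<Rightarrow> (bool list \<Rightarrow> real) \<Rightarrow>
    complex mat \<Rightarrow> (nat \<Rightarrow> bool \<Rightarrow> complex mat) \<Rightarrow> complex mat \<Rightarrow> complex mat \<Rightarrow> real" where
  "win_prob N d v q \<rho> Us P0 P1 =
     Re (\<Sum>x\<in>bitstrings N. complex_of_real (q x) *
          tr ((if v x then P1 else P0) * (ctrl N d Us x * \<rho> * adj (ctrl N d Us x))))"

definition P_W :: "nat \<Rightarrow> nat \<Rightarrow> (bool list \<Rightarrow> bool) \<Rightarrow> (bool list \<Rightarrow> real) \<Rightarrow>
    complex mat \<Rightarrow> (nat \<Rightarrow> bool \<Rightarrow> complex mat) \<Rightarrow> real" where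
  "P_W N d v q \<rho> Us = Sup {win_prob N d v q \<rho> Us P0 P1 | P0 P1. povm2 (N*d) P0 P1}"

definition proj :: "complex vec \<Rightarrow> complex mat" where
  "proj \<psi> = mat (dim_vec \<psi>) (dim_vec \<psi>) (\<lambda>(i,j). \<psi> $ i * cnj (\<psi> $ j))"

text \<open>|psi> = sum_i sqrt(p_i) |i>|chi>.\<close>
definition prod_state :: "nat \<Rightarrow> nat \<Rightarrow> (nat \<Rightarrow> real) \<Rightarrow> complex vec \<Rightarrow> complex vec" where
  "prod_state N d p \<chi> = vec (N*d) (\<lambda>r. complex_of_real (sqrt (p (r div d))) * \<chi> $ (r mod d))"

end

theory Submission
  imports Defs "HOL-Analysis.Function_Topology" "HOL-Analysis.Elementary_Metric_Spaces"
begin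

lemma mv_entry: "A \<in> carrier_mat n m \<Longrightarrow> y \<in> carrier_vec m \<Longrightarrow> i < n \<Longrightarrow>
  (A *\<^sub>v y) $ i = (\<Sum>k<m. A $$ (i,k) * y $ k)"
  by (simp add: scalar_prod_def atLeast0LessThan)

lemma mm_entry: "A \<in> carrier_mat n m \<Longrightarrow> B \<in> carrier_mat m l \<Longrightarrow> i < n \<Longrightarrow> j < l \<Longrightarrow>
  (A * B) $$ (i,j) = (\<Sum>k<m. A $$ (i,k) * B $$ (k,j))"
  by (simp add: scalar_prod_def atLeast0LessThan)

lemma adj_dims[simp]: "dim_row (adj A) = dim_col A" "dim_col (adj A) = dim_row A"
  unfolding adj_def by simp_all

lemma adj_carrier[simp]: "A \<in> carrier_mat n m \<Longrightarrow> adj A \<in> carrier_mat m n"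
  unfolding carrier_mat_def by simp

lemma adj_entry[simp]: "i < dim_col A \<Longrightarrow> j < dim_row A \<Longrightarrow> adj A $$ (i,j) = cnj (A $$ (j,i))"
  unfolding adj_def by simp

lemma adj_adj: "adj (adj A) = A"
  by (rule eq_matI) simp_all

definition Qf :: "complex mat \<Rightarrow> complex Matrix.vec \<Rightarrow> complex" where
  "Qf A w = (\<Sum>i<dim_vec w. cnj (w $ i) * (A *\<^sub>v w) $ i)"

lemma psd_Qf: "psd n A \<longleftrightarrow> A \<in> carrier_mat n n \<and> (\<forall>w\<in>carrier_vec n. Im (Qf A w) = 0 \<and> Re (Qf A w) \<ge> 0)"
  unfolding psd_def Qf_def Let_def by (simp add: carrier_vecD)

lemma Qf_adj:
  assumes A: "A \<in> carrier_mat n m" and P: "P \<in> carrier_mat n n" and y: "y \<in> carrier_vec m"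
  shows "Qf P (A *\<^sub>v y) = Qf (adj A * P * A) y"
proof -
  have Ay: "A *\<^sub>v y \<in> carrier_vec n" using A y by simp
  have PAy: "P *\<^sub>v (A *\<^sub>v y) \<in> carrier_vec n" using P Ay by simp
  have e: "adj A * P * A *\<^sub>v y = adj A *\<^sub>v (P *\<^sub>v (A *\<^sub>v y))"
    proof -
    have "adj A * P \<in> carrier_mat m n" using mult_carrier_mat[OF adj_carrier[OF A] P] .
    hence "adj A * P * A *\<^sub>v y = (adj A * P) *\<^sub>v (A *\<^sub>v y)"
      using assoc_mult_mat_vec[OF _ A y] by blast
    also have "\<dots> = adj A *\<^sub>v (P *\<^sub>v (A *\<^sub>v y))"
      using assoc_mult_mat_vec[OF adj_carrier[OF A] P Ay] by blast
    finally show ?thesis .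
  qed
  have dy: "dim_vec y = m" using y by simp
  have "Qf (adj A * P * A) y = (\<Sum>i<m. cnj (y $ i) * (\<Sum>k<n. cnj (A $$ (k,i)) * (P *\<^sub>v (A *\<^sub>v y)) $ k))"
    unfolding Qf_def e dy
  proof (rule sum.cong[OF refl])
    fix i assume i: "i \<in> {..<m}"
    show "cnj (y $ i) * (adj A *\<^sub>v (P *\<^sub>v (A *\<^sub>v y))) $ i =
      cnj (y $ i) * (\<Sum>k<n. cnj (A $$ (k, i)) * (P *\<^sub>v (A *\<^sub>v y)) $ k)"
      using i A by (subst mv_entry[OF adj_carrier[OF A] PAy]) auto
  qed
  also have "\<dots> = (\<Sum>k<n. (\<Sum>i<m. cnj (A $$ (k,i) * y $ i)) * (P *\<^sub>v (A *\<^sub>v y)) $ k)"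
    proof -
    have "(\<Sum>i<m. cnj (y $ i) * (\<Sum>k<n. cnj (A $$ (k,i)) * (P *\<^sub>v (A *\<^sub>v y)) $ k))
       = (\<Sum>i<m. \<Sum>k<n. cnj (A $$ (k,i) * y $ i) * (P *\<^sub>v (A *\<^sub>v y)) $ k)"
      by (simp add: sum_distrib_left ac_simps)
    also have "\<dots> = (\<Sum>k<n. \<Sum>i<m. cnj (A $$ (k,i) * y $ i) * (P *\<^sub>v (A *\<^sub>v y)) $ k)"
      by (rule sum.swap)
    also have "\<dots> = (\<Sum>k<n. (\<Sum>i<m. cnj (A $$ (k,i) * y $ i)) * (P *\<^sub>v (A *\<^sub>v y)) $ k)"
      by (simp add: sum_distrib_right)
    finally show ?thesis .
  qed
  also have "\<dots> = Qf P (A *\<^sub>v y)"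
    unfolding Qf_def 
  proof (rule sum.cong)
    show "{..<n} = {..<dim_vec (A *\<^sub>v y)}" using A by simp
    fix k assume k: "k \<in> {..<dim_vec (A *\<^sub>v y)}"
    show "(\<Sum>i<m. cnj (A $$ (k, i) * y $ i)) * (P *\<^sub>v (A *\<^sub>v y)) $ k =
         cnj ((A *\<^sub>v y) $ k) * (P *\<^sub>v (A *\<^sub>v y)) $ k"
      using k A by (subst mv_entry[OF A y]) (auto simp: sum_distrib_right)
  qed
  finally show ?thesis by simp
qed

definition blk :: "nat \<Rightarrow> nat \<Rightarrow> complex Matrix.vec \<Rightarrow> complex Matrix.vec" where
  "blk d i v = vec d (\<lambda>a. v $ (i*d+a))"

definition Bd :: "nat \<Rightarrow> nat \<Rightarrow> (nat \<Rightarrow> complex mat) \<Rightarrow> complex mat" where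
  "Bd N d F = mat (N*d) (N*d) (\<lambda>(r,c). if r div d = c div d then F (r div d) $$ (r mod d, c mod d) else 0)"

lemma ctrl_Bd: "ctrl N d Us x = Bd N d (\<lambda>i. Us i (x ! i))"
  unfolding ctrl_def Bd_def by simp

lemma Bd_carrier[simp]: "Bd N d F \<in> carrier_mat (N*d) (N*d)"
  unfolding Bd_def by simp

lemma Bd_dims[simp]: "dim_row (Bd N d F) = N*d" "dim_col (Bd N d F) = N*d"
  unfolding Bd_def by simp_all

lemma blk_carrier[simp]: "blk d i v \<in> carrier_vec d"
  unfolding blk_def by simp

lemma blk_index[simp]: "a < d \<Longrightarrow> blk d i v $ a = v $ (i*d+a)"
  unfolding blk_def by simp

lemma divmod_blk: "(a::nat) < d \<Longrightarrow> (i*d+a) div d = i" "(a::nat) < d \<Longrightarrow> (i*d+a) mod d = a"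
  by simp_all

lemma idx_lt: "(i::nat) < N \<Longrightarrow> a < d \<Longrightarrow> i*d+a < N*d"
proof -
  assume "i < N" "a < d"
  hence "i*d + a < i*d + d" by simp
  also have "\<dots> = (Suc i)*d" by simp
  also have "\<dots> \<le> N*d" using \<open>i<N\<close> by (intro mult_right_mono) auto
  finally show ?thesis .
qed

lemma sum_add_split: "(\<Sum>k<(m::nat)+d. g k) = (\<Sum>k<m. g k) + (\<Sum>a<d. g (m+a))"
  by (induction d) (simp_all add: add.assoc)

lemma sum_split: "(\<Sum>k<(N::nat)*d. g k) = (\<Sum>i<N. \<Sum>a<d. g (i*d+a))"
proof (induction N)
  case 0 then show ?case by simp
next
  case (Suc N)
  have "(\<Sum>k<Suc N*d. g k) = (\<Sum>k<N*d + d. g k)" by (simp add: add.commute)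
  also have "\<dots> = (\<Sum>k<N*d. g k) + (\<Sum>a<d. g (N*d+a))" by (rule sum_add_split)
  finally show ?case using Suc by simp
qed

lemma idx_decomp: "(r::nat) < N*d \<Longrightarrow> r div d < N \<and> r mod d < d \<and> r = (r div d)*d + r mod d"
  proof -
  assume r: "r < N*d"
  hence "d > 0" by (cases d) auto
  thus ?thesis using r by (simp add: less_mult_imp_div_less)
qed

lemma blk_eqI:
  assumes "A \<in> carrier_mat (N*d) (N*d)" "B \<in> carrier_mat (N*d) (N*d)"
    and "\<And>i a j b. i < N \<Longrightarrow> a < d \<Longrightarrow> j < N \<Longrightarrow> b < d \<Longrightarrow> A $$ (i*d+a, j*d+b) = B $$ (i*d+a, j*d+b)"
  shows "A = B"
proof (rule eq_matI)
  fix r c assume r: "r < dim_row B" and c: "c < dim_col B"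
  have r': "r < N*d" and c': "c < N*d" using r c assms(2) by auto
  from idx_decomp[OF r'] idx_decomp[OF c'] assms(3)[of "r div d" "r mod d" "c div d" "c mod d"]
  show "A $$ (r, c) = B $$ (r, c)" by metis
qed (use assms in auto)

lemma vec_blk_eqI:
  assumes "u \<in> carrier_vec (N*d)" "w \<in> carrier_vec (N*d)"
    and "\<And>i a. i < N \<Longrightarrow> a < d \<Longrightarrow> u $ (i*d+a) = w $ (i*d+a)"
  shows "u = w"
proof (rule eq_vecI)
  fix r assume r: "r < dim_vec w"
  have r': "r < N*d" using r assms(2) by auto
  from idx_decomp[OF r'] assms(3)[of "r div d" "r mod d"]
  show "u $ r = w $ r" by metis
qed (use assms in auto)

lemma Bd_entry: "i < N \<Longrightarrow> a < d \<Longrightarrow> j < N \<Longrightarrow> b < d \<Longrightarrow>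
   Bd N d F $$ (i*d+a, j*d+b) = (if i = j then F i $$ (a,b) else 0)"
  unfolding Bd_def by (simp add: idx_lt)

lemma sum_if_eq: "i < (N::nat) \<Longrightarrow> (\<Sum>j<N. if i = j then f j else (0::complex)) = f i"
proof -
  assume i: "i < N"
  have "(\<Sum>j<N. if i = j then f j else (0::complex)) = (\<Sum>j<N. if j = i then f j else 0)"
    by (intro sum.cong) auto
  also have "\<dots> = f i" using i sum.delta[of "{..<N}" i f] by simp
  finally show ?thesis .
qed

lemma Bd_mv:
  assumes F: "F i \<in> carrier_mat d d" and v: "v \<in> carrier_vec (N*d)" and i: "i < N" and a: "a < d"
  shows "(Bd N d F *\<^sub>v v) $ (i*d+a) = (F i *\<^sub>v blk d i v) $ a"
proof -
  have "(Bd N d F *\<^sub>v v) $ (i*d+a) = (\<Sum>k<N*d. Bd N d F $$ (i*d+a, k) * v $ k)"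
    by (rule mv_entry[OF Bd_carrier v idx_lt[OF i a]])
  also have "\<dots> = (\<Sum>j<N. \<Sum>b<d. Bd N d F $$ (i*d+a, j*d+b) * v $ (j*d+b))"
    by (rule sum_split)
  also have "\<dots> = (\<Sum>j<N. if i = j then (\<Sum>b<d. F i $$ (a,b) * v $ (i*d+b)) else 0)"
    by (intro sum.cong refl) (auto simp: Bd_entry i a)
  also have "\<dots> = (\<Sum>b<d. F i $$ (a,b) * v $ (i*d+b))"
    by (rule sum_if_eq[OF i])
  also have "\<dots> = (F i *\<^sub>v blk d i v) $ a"
    by (subst mv_entry[OF F blk_carrier a]) simp
  finally show ?thesis .
qed

lemma Bd_mult:
  assumes F: "\<And>i. i < N \<Longrightarrow> F i \<in> carrier_mat d d" and G: "\<And>i. i < N \<Longrightarrow> G i \<in> carrier_mat d d"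
  shows "Bd N d F * Bd N d G = Bd N d (\<lambda>i. F i * G i)"
proof (rule blk_eqI[of _ N d])
  show "Bd N d F * Bd N d G \<in> carrier_mat (N*d) (N*d)" using mult_carrier_mat[OF Bd_carrier Bd_carrier] .
  fix i a j b assume i: "i < N" and a: "a < d" and j: "j < N" and b: "b < d"
  have "(Bd N d F * Bd N d G) $$ (i*d+a, j*d+b) = (\<Sum>k<N*d. Bd N d F $$ (i*d+a, k) * Bd N d G $$ (k, j*d+b))"
    by (rule mm_entry[OF Bd_carrier Bd_carrier idx_lt[OF i a] idx_lt[OF j b]])
  also have "\<dots> = (\<Sum>l<N. \<Sum>e<d. Bd N d F $$ (i*d+a, l*d+e) * Bd N d G $$ (l*d+e, j*d+b))"
    by (rule sum_split)
  also have "\<dots> = (\<Sum>l<N. if i = l then (if i = j then (\<Sum>e<d. F i $$ (a,e) * G i $$ (e,b)) else 0) else 0)"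
    by (intro sum.cong refl) (auto simp: Bd_entry i a j b)
  also have "\<dots> = (if i = j then (\<Sum>e<d. F i $$ (a,e) * G i $$ (e,b)) else 0)"
    by (rule sum_if_eq[OF i])
  also have "\<dots> = Bd N d (\<lambda>i. F i * G i) $$ (i*d+a, j*d+b)"
    using F[OF i] G[OF i] mm_entry[OF F[OF i] G[OF i] a b] by (auto simp: Bd_entry i a j b simp del: index_mult_mat)
  finally show "(Bd N d F * Bd N d G) $$ (i*d+a, j*d+b) = Bd N d (\<lambda>i. F i * G i) $$ (i*d+a, j*d+b)" .
qed simp

lemma Bd_adj:
  assumes F: "\<And>i. i < N \<Longrightarrow> F i \<in> carrier_mat d d"
  shows "adj (Bd N d F) = Bd N d (\<lambda>i. adj (F i))"
proof (rule blk_eqI[of _ N d])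
  fix i a j b assume i: "i < N" and a: "a < d" and j: "j < N" and b: "b < d"
  show "adj (Bd N d F) $$ (i*d+a, j*d+b) = Bd N d (\<lambda>i. adj (F i)) $$ (i*d+a, j*d+b)"
    using F[OF i] F[OF j] by (auto simp: Bd_entry i a j b idx_lt)
qed simp_all

lemma blk_idx_inj: "(a::nat) < d \<Longrightarrow> b < d \<Longrightarrow> i*d+a = j*d+b \<Longrightarrow> i = j \<and> a = b"
  by (metis divmod_blk)

lemma Bd_one: "Bd N d (\<lambda>i. 1\<^sub>m d) = 1\<^sub>m (N*d)"
  by (rule blk_eqI[of _ N d]) (auto simp: Bd_entry idx_lt dest: blk_idx_inj)

lemma Bd_cong: "(\<And>i. i < N \<Longrightarrow> F i = G i) \<Longrightarrow> Bd N d F = Bd N d G"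
  by (rule blk_eqI[of _ N d]) (auto simp: Bd_entry)

lemma Bd_unitary:
  assumes "\<And>i. i < N \<Longrightarrow> unitary_mat d (F i)"
  shows "unitary_mat (N*d) (Bd N d F)"
proof -
  have F: "\<And>i. i < N \<Longrightarrow> F i \<in> carrier_mat d d" using assms unitary_mat_def by auto
  have "adj (Bd N d F) * Bd N d F = Bd N d (\<lambda>i. adj (F i) * F i)"
    by (simp add: Bd_adj[OF F] Bd_mult F)
  also have "\<dots> = Bd N d (\<lambda>i. 1\<^sub>m d)" by (rule Bd_cong) (use assms unitary_mat_def in auto)
  finally have 1: "adj (Bd N d F) * Bd N d F = 1\<^sub>m (N*d)" by (simp add: Bd_one)
  have "Bd N d F * adj (Bd N d F) = Bd N d (\<lambda>i. F i * adj (F i))"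
    by (simp add: Bd_adj[OF F] Bd_mult F)
  also have "\<dots> = Bd N d (\<lambda>i. 1\<^sub>m d)" by (rule Bd_cong) (use assms unitary_mat_def in auto)
  finally have 2: "Bd N d F * adj (Bd N d F) = 1\<^sub>m (N*d)" by (simp add: Bd_one)
  show ?thesis using 1 2 unitary_mat_def by simp
qed

lemma sum_delta_l: "(a::nat) < d \<Longrightarrow> (\<Sum>c<d. (if a = c then 1 else 0) * X c) = (X a :: complex)"
proof -
  assume a: "a < d"
  have "(\<Sum>c<d. (if a = c then 1 else 0) * X c) = (\<Sum>c<d. if c = a then X c else 0)"
    by (intro sum.cong) auto
  also have "\<dots> = X a" using a sum.delta[of "{..<d}" a X] by simp
  finally show ?thesis .
qed

lemma sum_delta_r: "(b::nat) < d \<Longrightarrow> (\<Sum>c<d. X c * (if c = b then 1 else 0)) = (X b :: complex)"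
proof -
  assume b: "b < d"
  have "(\<Sum>c<d. X c * (if c = b then 1 else 0)) = (\<Sum>c<d. if c = b then X c else 0)"
    by (intro sum.cong) auto
  also have "\<dots> = X b" using b sum.delta[of "{..<d}" b X] by simp
  finally show ?thesis .
qed

definition hh :: "nat \<Rightarrow> real \<Rightarrow> complex Matrix.vec \<Rightarrow> complex mat" where
  "hh d k w = mat d d (\<lambda>(a,b). (if a = b then 1 else 0) - of_real k * w $ a * cnj (w $ b))"

lemma hh_carrier[simp]: "hh d k w \<in> carrier_mat d d"
  unfolding hh_def by simp

lemma hh_adj: "adj (hh d k w) = hh d k w"
  by (rule eq_matI) (auto simp: hh_def)

lemma hh_sq:
  assumes w: "w \<in> carrier_vec d" and k: "k * k * (\<Sum>a<d. (cmod (w $ a))\<^sup>2) = 2 * k"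
  shows "hh d k w * hh d k w = 1\<^sub>m d"
proof (rule eq_matI)
  fix a b assume a: "a < dim_row (1\<^sub>m d)" and b: "b < dim_col (1\<^sub>m d)"
  hence a: "a < d" and b: "b < d" by auto
  define K where "K = (of_real k :: complex)"
  have ss: "(\<Sum>c<d. cnj (w $ c) * w $ c) = of_real (\<Sum>c<d. (cmod (w $ c))\<^sup>2)"
  proof -
    have "\<And>c. cnj (w $ c) * w $ c = of_real ((cmod (w $ c))\<^sup>2)"
      by (metis complex_norm_square mult.commute)
    thus ?thesis by (simp only: of_real_sum)
  qed
  have kk: "K * K * (\<Sum>c<d. cnj (w $ c) * w $ c) = 2 * K"
    unfolding ss K_def using arg_cong[OF k, of complex_of_real] by simp
  have "(hh d k w * hh d k w) $$ (a,b) = (\<Sum>c<d. ((if a = c then 1 else 0) - K * w $ a * cnj (w $ c)) *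
          ((if c = b then 1 else 0) - K * w $ c * cnj (w $ b)))"
    apply (subst mm_entry[OF hh_carrier hh_carrier a b])
    apply (intro sum.cong refl)
    using a b by (simp add: hh_def K_def)
  also have "\<dots> = (\<Sum>c<d. (if a = c then 1 else 0) * (if c = b then 1 else 0))
      - (\<Sum>c<d. (if a = c then 1 else 0) * (K * w $ c * cnj (w $ b)))
      - (\<Sum>c<d. (K * w $ a * cnj (w $ c)) * (if c = b then 1 else 0))
      + (K * K * w $ a * cnj (w $ b)) * (\<Sum>c<d. cnj (w $ c) * w $ c)"
    by (simp add: algebra_simps sum_subtractf sum.distrib sum_distrib_left)
  also have "\<dots> = (if a = b then 1 else 0) - K * w $ a * cnj (w $ b) - K * w $ a * cnj (w $ b)
      + w $ a * cnj (w $ b) * (K * K * (\<Sum>c<d. cnj (w $ c) * w $ c))"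
    using a b by (simp only: sum_delta_l sum_delta_r) (simp add: algebra_simps)
  also have "\<dots> = (if a = b then 1 else 0)" unfolding kk by (simp add: algebra_simps)
  finally show "(hh d k w * hh d k w) $$ (a,b) = 1\<^sub>m d $$ (a,b)" using a b by simp
qed (simp_all add: hh_def)

lemma adj_smult: "adj (a \<cdot>\<^sub>m A) = cnj a \<cdot>\<^sub>m adj A"
  by (rule eq_matI) auto

lemma smult_smult_m: "a \<cdot>\<^sub>m (b \<cdot>\<^sub>m A) = (a * b) \<cdot>\<^sub>m (A :: complex mat)"
  by (rule eq_matI) auto

lemma smult_one_m: "(1::complex) \<cdot>\<^sub>m A = A"
  by (rule eq_matI) auto

lemma unitary_smult:
  assumes U: "unitary_mat d U" and a: "cmod a = 1"
  shows "unitary_mat d (a \<cdot>\<^sub>m U)"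
proof -
  have C: "U \<in> carrier_mat d d" using U unitary_mat_def by auto
  have aa: "cnj a * a = 1" "a * cnj a = 1" using a complex_norm_square[of a]
    by (simp_all add: mult.commute)
  have "adj (a \<cdot>\<^sub>m U) * (a \<cdot>\<^sub>m U) = (cnj a * a) \<cdot>\<^sub>m (adj U * U)"
    unfolding adj_smult
    by (simp add: mult_smult_assoc_mat[OF adj_carrier[OF C] smult_carrier_mat[OF C]]
        mult_smult_distrib[OF adj_carrier[OF C] C] smult_smult_m)
  moreover have "(a \<cdot>\<^sub>m U) * adj (a \<cdot>\<^sub>m U) = (a * cnj a) \<cdot>\<^sub>m (U * adj U)"
    unfolding adj_smult
    by (simp add: mult_smult_assoc_mat[OF C smult_carrier_mat[OF adj_carrier[OF C]]]
        mult_smult_distrib[OF C adj_carrier[OF C]] smult_smult_m)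
  ultimately show ?thesis using U C aa unfolding unitary_mat_def by (simp add: smult_one_m)
qed

lemma hh_unitary:
  assumes w: "w \<in> carrier_vec d" and k: "k * k * (\<Sum>a<d. (cmod (w $ a))\<^sup>2) = 2 * k"
  shows "unitary_mat d (hh d k w)"
  using hh_sq[OF w k] unfolding unitary_mat_def hh_adj by simp

lemma house:
  assumes u: "u \<in> carrier_vec d" and d: "0 < d" and nu: "(\<Sum>a<d. (cmod (u $ a))\<^sup>2) = 1"
  shows "\<exists>W. unitary_mat d W \<and> W *\<^sub>v unit_vec d 0 = u"
proof -
  define u0 where "u0 = u $ 0"
  define c where "c = cmod u0"
  define \<alpha> where "\<alpha> = (if u0 = 0 then 1 else u0 / of_real c)"
  have \<alpha>1: "cmod \<alpha> = 1" unfolding \<alpha>_def c_def by (simp add: norm_divide)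
  have \<alpha>u: "u0 = of_real c * \<alpha>" unfolding \<alpha>_def c_def by auto
  have \<alpha>\<alpha>: "\<alpha> * cnj \<alpha> = 1" using \<alpha>1 complex_norm_square[of \<alpha>] by simp
  have \<alpha>c: "\<alpha> * cnj u0 = of_real c"
  proof -
    have "\<alpha> * cnj u0 = of_real c * (\<alpha> * cnj \<alpha>)" by (subst \<alpha>u) (simp add: algebra_simps)
    thus ?thesis using \<alpha>\<alpha> by simp
  qed
  define w where "w = vec d (\<lambda>a. (if a = 0 then \<alpha> else 0) - u $ a)"
  have wc: "w \<in> carrier_vec d" unfolding w_def by simp
  define nw where "nw = (\<Sum>a<d. (cmod (w $ a))\<^sup>2)"
  have diff: "(\<Sum>a<d. (cmod (w $ a))\<^sup>2) - (\<Sum>a<d. (cmod (u $ a))\<^sup>2)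
      = (\<Sum>a<d. if a = 0 then (cmod (\<alpha> - u0))\<^sup>2 - c\<^sup>2 else 0)"
    unfolding sum_subtractf[symmetric]
    by (intro sum.cong refl) (auto simp: w_def u0_def c_def norm_minus_commute)
  also have "\<dots> = (cmod (\<alpha> - u0))\<^sup>2 - c\<^sup>2" using d by (simp add: sum.delta)
  also have "cmod (\<alpha> - u0) = \<bar>1 - c\<bar>"
  proof -
    have "\<alpha> - u0 = \<alpha> * of_real (1 - c)" by (subst \<alpha>u) (simp add: algebra_simps)
    hence "cmod (\<alpha> - u0) = cmod \<alpha> * cmod (complex_of_real (1 - c))" by (simp only: norm_mult)
    thus ?thesis by (simp only: \<alpha>1 norm_of_real mult_1)
  qed
  finally have nwv: "nw = 2 - 2 * c" unfolding nw_def nu by (simp add: power2_eq_square algebra_simps)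
  define k where "k = (if nw = 0 then 0 else 2 / nw)"
  have kk: "k * k * nw = 2 * k" unfolding k_def by auto
  define W where "W = \<alpha> \<cdot>\<^sub>m hh d k w"
  have unit: "unitary_mat d W" unfolding W_def
    by (rule unitary_smult[OF hh_unitary[OF wc] \<alpha>1]) (use kk nw_def in simp)
  have w0: "\<alpha> * cnj (w $ 0) = of_real (1 - c)"
    using d \<alpha>\<alpha> \<alpha>c by (simp add: w_def u0_def[symmetric] algebra_simps)
  have "W *\<^sub>v unit_vec d 0 = u"
  proof (rule eq_vecI)
    fix a assume "a < dim_vec u"
    hence a: "a < d" using u by simp
    have "(W *\<^sub>v unit_vec d 0) $ a = (\<Sum>b<d. W $$ (a,b) * unit_vec d 0 $ b)"
      by (rule mv_entry[OF _ unit_vec_carrier a]) (simp add: W_def)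
    also have "\<dots> = (\<Sum>b<d. W $$ (a,b) * (if b = 0 then 1 else 0))"
      by (intro sum.cong refl) simp
    also have "\<dots> = W $$ (a,0)" by (rule sum_delta_r[OF d])
    also have "\<dots> = \<alpha> * (if a = 0 then 1 else 0) - of_real k * w $ a * (\<alpha> * cnj (w $ 0))"
      using a d by (simp add: W_def hh_def algebra_simps)
    also have "\<dots> = u $ a"
    proof (cases "nw = 0")
      case True
      have "\<forall>b\<in>{..<d}. (cmod (w $ b))\<^sup>2 = 0"
        using True unfolding nw_def by (subst sum_nonneg_eq_0_iff[symmetric]) auto
      hence "w $ a = 0" using a by auto
      thus ?thesis using True a unfolding k_def by (auto simp: w_def)
    next
      case False
      have "c \<noteq> 1" using False nwv by auto
      hence "k * (1 - c) = 1"
        using False unfolding k_def nwv by (simp add: field_simps)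
      hence "of_real k * of_real (1 - c) = (1::complex)"
        by (metis of_real_mult of_real_1)
      hence "of_real k * w $ a * (\<alpha> * cnj (w $ 0)) = w $ a"
        unfolding w0 by (metis mult.commute mult.left_commute mult_1_right)
      hence "\<alpha> * (if a = 0 then 1 else 0) - of_real k * w $ a * (\<alpha> * cnj (w $ 0))
          = \<alpha> * (if a = 0 then 1 else 0) - w $ a" by (simp only:)
      also have "\<dots> = u $ a" using a by (simp add: w_def)
      finally show ?thesis .
    qed
    finally show "(W *\<^sub>v unit_vec d 0) $ a = u $ a" .
  qed (use u in \<open>simp add: W_def hh_def\<close>)
  thus ?thesis using unit by blast
qed

definition tv :: "nat \<Rightarrow> nat \<Rightarrow> nat \<Rightarrow> complex \<Rightarrow> complex \<Rightarrow> complex Matrix.vec" where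
  "tv n i j \<alpha> \<beta> = vec n (\<lambda>k. (if k = i then \<alpha> else 0) + (if k = j then \<beta> else 0))"

lemma tv_dim[simp]: "dim_vec (tv n i j a b) = n" unfolding tv_def by simp
lemma tv_index[simp]: "k < n \<Longrightarrow> tv n i j a b $ k = (if k = i then a else 0) + (if k = j then b else 0)"
  unfolding tv_def by simp

lemma Qf_tv:
  assumes A: "A \<in> carrier_mat n n" and i: "i < n" and j: "j < n"
  shows "Qf A (tv n i j \<alpha> \<beta>) = cnj \<alpha> * \<alpha> * A $$ (i,i) + cnj \<alpha> * \<beta> * A $$ (i,j)
            + cnj \<beta> * \<alpha> * A $$ (j,i) + cnj \<beta> * \<beta> * A $$ (j,j)"
proof -
  have tvc: "tv n i j \<alpha> \<beta> \<in> carrier_vec n" unfolding tv_def by simp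
  have mv: "(A *\<^sub>v tv n i j \<alpha> \<beta>) $ k = A $$ (k,i) * \<alpha> + A $$ (k,j) * \<beta>" if k: "k < n" for k
  proof -
    have "(A *\<^sub>v tv n i j \<alpha> \<beta>) $ k = (\<Sum>l<n. A $$ (k,l) * ((if l = i then \<alpha> else 0) + (if l = j then \<beta> else 0)))"
      by (subst mv_entry[OF A tvc k]) (simp add: tv_def)
    also have "\<dots> = (\<Sum>l<n. A $$ (k,l) * \<alpha> * (if l = i then 1 else 0)) + (\<Sum>l<n. A $$ (k,l) * \<beta> * (if l = j then 1 else 0))"
      by (subst sum.distrib[symmetric], intro sum.cong refl, simp add: algebra_simps)
    also have "\<dots> = A $$ (k,i) * \<alpha> + A $$ (k,j) * \<beta>"
      by (simp only: sum_delta_r[OF i] sum_delta_r[OF j])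
    finally show ?thesis .
  qed
  have "Qf A (tv n i j \<alpha> \<beta>) = (\<Sum>k<n. cnj ((if k = i then \<alpha> else 0) + (if k = j then \<beta> else 0)) * (A $$ (k,i) * \<alpha> + A $$ (k,j) * \<beta>))"
    unfolding Qf_def by (intro sum.cong) (auto simp: mv)
  also have "\<dots> = (\<Sum>k<n. (if i = k then 1 else 0) * (cnj \<alpha> * (A $$ (k,i) * \<alpha> + A $$ (k,j) * \<beta>)))
      + (\<Sum>k<n. (if j = k then 1 else 0) * (cnj \<beta> * (A $$ (k,i) * \<alpha> + A $$ (k,j) * \<beta>)))"
    by (subst sum.distrib[symmetric], intro sum.cong refl, simp add: algebra_simps)
  also have "\<dots> = cnj \<alpha> * (A $$ (i,i) * \<alpha> + A $$ (i,j) * \<beta>) + cnj \<beta> * (A $$ (j,i) * \<alpha> + A $$ (j,j) * \<beta>)"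
    by (simp only: sum_delta_l[OF i] sum_delta_l[OF j])
  finally show ?thesis by (simp add: algebra_simps)
qed

lemma psd_QfD: "psd n A \<Longrightarrow> w \<in> carrier_vec n \<Longrightarrow> Im (Qf A w) = 0 \<and> Re (Qf A w) \<ge> 0"
  unfolding psd_Qf by auto

lemma tv_carrier[simp]: "tv n i j a b \<in> carrier_vec n" unfolding tv_def by simp

lemma psd_diag:
  assumes P: "psd n A" and i: "i < n"
  shows "Im (A $$ (i,i)) = 0 \<and> Re (A $$ (i,i)) \<ge> 0"
proof -
  have A: "A \<in> carrier_mat n n" using P psd_Qf by auto
  show ?thesis using psd_QfD[OF P tv_carrier[of n i i 1 0]] Qf_tv[OF A i i, of 1 0] by simp
qed

lemma psd_herm:
  assumes P: "psd n A" and i: "i < n" and j: "j < n"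
  shows "A $$ (j,i) = cnj (A $$ (i,j))"
proof -
  have A: "A \<in> carrier_mat n n" using P psd_Qf by auto
  have di: "Im (A $$ (i,i)) = 0" and dj: "Im (A $$ (j,j)) = 0" using psd_diag[OF P i] psd_diag[OF P j] by auto
  have 1: "Im (A $$ (i,j) + A $$ (j,i)) = 0"
    using psd_QfD[OF P tv_carrier[of n i j 1 1]] Qf_tv[OF A i j, of 1 1] di dj by simp
  have 2: "Re (A $$ (i,j) - A $$ (j,i)) = 0"
    using psd_QfD[OF P tv_carrier[of n i j 1 \<i>]] Qf_tv[OF A i j, of 1 \<i>] di dj by simp
  show ?thesis using 1 2 by (simp add: complex_eq_iff)
qed

lemma psd_cs:
  assumes P: "psd n A" and i: "i < n" and j: "j < n"
  shows "(cmod (A $$ (i,j)))\<^sup>2 \<le> Re (A $$ (i,i)) * Re (A $$ (j,j))"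
proof -
  have A: "A \<in> carrier_mat n n" using P psd_Qf by auto
  define x where "x = (cmod (A $$ (i,j)))\<^sup>2"
  define a where "a = Re (A $$ (i,i))"
  define b where "b = Re (A $$ (j,j))"
  have ai: "A $$ (i,i) = of_real a" using psd_diag[OF P i] unfolding a_def by (simp add: complex_eq_iff)
  have bj: "A $$ (j,j) = of_real b" using psd_diag[OF P j] unfolding b_def by (simp add: complex_eq_iff)
  have a0: "a \<ge> 0" "b \<ge> 0" using psd_diag[OF P i] psd_diag[OF P j] a_def b_def by auto
  have xx: "A $$ (i,j) * cnj (A $$ (i,j)) = of_real x" unfolding x_def by (metis complex_norm_square)
  have quad: "t * t * x * a - 2 * t * x + b \<ge> 0" for t :: real
  proof -
    define \<alpha> where "\<alpha> = - of_real t * A $$ (i,j)"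
    have "Qf A (tv n i j \<alpha> 1) = of_real (t * t * x * a - 2 * t * x + b)"
      unfolding Qf_tv[OF A i j] psd_herm[OF P i j] ai bj \<alpha>_def
      using xx by (simp add: algebra_simps)
    thus ?thesis using psd_QfD[OF P tv_carrier[of n i j \<alpha> 1]] by simp
  qed
  show ?thesis unfolding x_def[symmetric] a_def[symmetric] b_def[symmetric]
  proof (cases "a = 0")
    case True
    have "x = 0"
    proof (rule ccontr)
      assume "x \<noteq> 0"
      hence xp: "x > 0" unfolding x_def by simp
      have "(b + 1) / x * x * 2 = 2 * (b+1)" using xp by simp
      thus False using quad[of "(b+1)/x"] True a0(2) by (simp add: algebra_simps)
    qed
    thus "x \<le> a * b" using True by simp
  next
    case False
    hence ap: "a > 0" using a0 by simp
    have "(1/a) * (1/a) * x * a - 2 * (1/a) * x + b \<ge> 0" by (rule quad)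
    hence "0 \<le> b - x / a" using ap by (simp add: field_simps power2_eq_square)
    hence "x / a \<le> b" by simp
    thus "x \<le> a * b" using ap by (simp add: divide_le_eq mult.commute)
  qed
qed

lemma unitary_carrier: "unitary_mat d U \<Longrightarrow> U \<in> carrier_mat d d"
  unfolding unitary_mat_def by simp

lemma unitary_adj: "unitary_mat d U \<Longrightarrow> unitary_mat d (adj U)"
  unfolding unitary_mat_def adj_adj by simp

lemma unitary_entry_le:
  assumes U: "unitary_mat d U" and a: "a < d" and b: "b < d"
  shows "cmod (U $$ (a,b)) \<le> 1"
proof -
  have C: "U \<in> carrier_mat d d" using U unitary_carrier by auto
  have "(adj U * U) $$ (b,b) = 1" using U b unfolding unitary_mat_def by simp
  hence "(\<Sum>k<d. cnj (U $$ (k,b)) * U $$ (k,b)) = 1"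
    using C b by (subst (asm) mm_entry[OF adj_carrier[OF C] C b b]) simp
  hence "(\<Sum>k<d. of_real ((cmod (U $$ (k,b)))\<^sup>2)) = (1::complex)"
    by (metis (no_types, lifting) complex_norm_square mult.commute sum.cong)
  hence s: "(\<Sum>k<d. (cmod (U $$ (k,b)))\<^sup>2) = 1"
    by (metis of_real_eq_1_iff of_real_sum)
  have "(cmod (U $$ (a,b)))\<^sup>2 \<le> (\<Sum>k<d. (cmod (U $$ (k,b)))\<^sup>2)"
    using a by (intro member_le_sum) auto
  hence "(cmod (U $$ (a,b)))\<^sup>2 \<le> 1" using s by simp
  thus ?thesis by (simp add: power_le_one_iff)
qed

lemma povm_carrier: "povm2 n P0 P1 \<Longrightarrow> P0 \<in> carrier_mat n n \<and> P1 \<in> carrier_mat n n"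
  unfolding povm2_def psd_Qf by auto

lemma povm_entry_le:
  assumes P: "povm2 n P0 P1" and a: "a < n" and b: "b < n"
  shows "cmod (P0 $$ (a,b)) \<le> 1 \<and> cmod (P1 $$ (a,b)) \<le> 1"
proof -
  have p0: "psd n P0" and p1: "psd n P1" and s: "P0 + P1 = 1\<^sub>m n" using P povm2_def by auto
  have C: "P0 \<in> carrier_mat n n" "P1 \<in> carrier_mat n n" using povm_carrier[OF P] by auto
  have d: "Re (P0 $$ (k,k)) + Re (P1 $$ (k,k)) = 1" if k: "k < n" for k
  proof -
    have "(P0 + P1) $$ (k,k) = 1" using s k by simp
    hence h: "P0 $$ (k,k) + P1 $$ (k,k) = 1" using C k by simp
    show ?thesis by (metis one_complex.sel(1) plus_complex.sel(1) h)
  qed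
  have le: "Re (P0 $$ (k,k)) \<le> 1 \<and> Re (P1 $$ (k,k)) \<le> 1 \<and> Re (P0 $$ (k,k)) \<ge> 0 \<and> Re (P1 $$ (k,k)) \<ge> 0" if k: "k < n" for k
    using d[OF k] psd_diag[OF p0 k] psd_diag[OF p1 k] by auto
  have "(cmod (P0 $$ (a,b)))\<^sup>2 \<le> 1"
    using psd_cs[OF p0 a b] le[OF a] le[OF b] mult_le_one[of "Re (P0 $$ (a,a))" "Re (P0 $$ (b,b))"] by linarith
  moreover have "(cmod (P1 $$ (a,b)))\<^sup>2 \<le> 1"
    using psd_cs[OF p1 a b] le[OF a] le[OF b] mult_le_one[of "Re (P1 $$ (a,a))" "Re (P1 $$ (b,b))"] by linarith
  ultimately show ?thesis by (simp add: power_le_one_iff)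
qed

lemma psd_conj:
  assumes P: "psd n P" and W: "W \<in> carrier_mat n n"
  shows "psd n (adj W * P * W)"
proof -
  have C: "P \<in> carrier_mat n n" using P psd_Qf by auto
  have "adj W * P * W \<in> carrier_mat n n" using C W by (metis adj_carrier mult_carrier_mat)
  moreover have "Im (Qf (adj W * P * W) w) = 0 \<and> Re (Qf (adj W * P * W) w) \<ge> 0" if w: "w \<in> carrier_vec n" for w
    using psd_QfD[OF P mult_mat_vec_carrier[OF W w]] Qf_adj[OF W C w] by simp
  ultimately show ?thesis unfolding psd_Qf by auto
qed

lemma povm_conj:
  assumes P: "povm2 n P0 P1" and W: "unitary_mat n W"
  shows "povm2 n (adj W * P0 * W) (adj W * P1 * W)"
proof -
  have C: "P0 \<in> carrier_mat n n" "P1 \<in> carrier_mat n n" using povm_carrier[OF P] by auto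
  have Wc: "W \<in> carrier_mat n n" using W unitary_carrier by auto
  have aW: "adj W \<in> carrier_mat n n" using Wc by simp
  have "adj W * P0 * W + adj W * P1 * W = (adj W * P0 + adj W * P1) * W"
    by (rule add_mult_distrib_mat[symmetric]) (use C aW Wc in auto)
  also have "adj W * P0 + adj W * P1 = adj W * (P0 + P1)"
    by (rule mult_add_distrib_mat[symmetric]) (use C aW in auto)
  also have "P0 + P1 = 1\<^sub>m n" using P povm2_def by auto
  also have "adj W * 1\<^sub>m n * W = adj W * W" using right_mult_one_mat[OF aW] by simp
  also have "\<dots> = 1\<^sub>m n" using W unitary_mat_def by auto
  finally show ?thesis using P psd_conj Wc unfolding povm2_def by auto
qed

definition nrm2 :: "nat \<Rightarrow> complex Matrix.vec \<Rightarrow> real" where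
  "nrm2 n w = (\<Sum>a<n. (cmod (w $ a))\<^sup>2)"

lemma cnj_mult_self: "cnj z * z = (complex_of_real (cmod z))\<^sup>2"
  by (metis complex_norm_square mult.commute of_real_power)

lemma Qf_one: "w \<in> carrier_vec n \<Longrightarrow> Qf (1\<^sub>m n) w = of_real (nrm2 n w)"
  unfolding Qf_def nrm2_def of_real_sum
  by (intro sum.cong) (auto simp: cnj_mult_self)

lemma unitary_norm:
  assumes U: "unitary_mat d U" and w: "w \<in> carrier_vec d"
  shows "nrm2 d (U *\<^sub>v w) = nrm2 d w"
proof -
  have C: "U \<in> carrier_mat d d" using U unitary_carrier by auto
  have "Qf (1\<^sub>m d) (U *\<^sub>v w) = Qf (adj U * 1\<^sub>m d * U) w" by (rule Qf_adj[OF C one_carrier_mat w])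
  also have "adj U * 1\<^sub>m d * U = 1\<^sub>m d" using U C unfolding unitary_mat_def by simp
  finally show ?thesis using Qf_one[OF mult_mat_vec_carrier[OF C w]] Qf_one[OF w] by simp
qed

lemma tr_proj_conj:
  assumes C: "C \<in> carrier_mat n n" and \<psi>: "\<psi> \<in> carrier_vec n" and P: "P \<in> carrier_mat n n"
  shows "tr (P * (C * proj \<psi> * adj C)) = Qf P (C *\<^sub>v \<psi>)"
proof -
  define y where "y = C *\<^sub>v \<psi>"
  have y: "y \<in> carrier_vec n" unfolding y_def using C \<psi> by simp
  have pc: "proj \<psi> \<in> carrier_mat n n" using \<psi> unfolding proj_def by simp
  have cp: "C * proj \<psi> \<in> carrier_mat n n" using C pc by simp
  have e1: "(C * proj \<psi>) $$ (i,l) = y $ i * cnj (\<psi> $ l)" if i: "i < n" and l: "l < n" for i l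
    unfolding mm_entry[OF C pc i l] y_def mv_entry[OF C \<psi> i] sum_distrib_right
    using \<psi> l by (intro sum.cong) (auto simp: proj_def)
  have e2: "C * proj \<psi> * adj C = proj y"
  proof (rule eq_matI)
    fix i j assume "i < dim_row (proj y)" "j < dim_col (proj y)"
    hence i: "i < n" and j: "j < n" using y by (auto simp: proj_def)
    have "(C * proj \<psi> * adj C) $$ (i,j) = (\<Sum>l<n. y $ i * cnj (\<psi> $ l) * cnj (C $$ (j,l)))"
      unfolding mm_entry[OF cp adj_carrier[OF C] i j] using C j by (intro sum.cong) (auto simp: e1 i)
    also have "\<dots> = y $ i * cnj (y $ j)"
      unfolding y_def mv_entry[OF C \<psi> j] cnj_sum sum_distrib_left by (intro sum.cong) (auto simp: ac_simps)
    finally show "(C * proj \<psi> * adj C) $$ (i,j) = proj y $$ (i,j)" using i j y by (simp add: proj_def)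
  qed (use y C in \<open>auto simp: proj_def\<close>)
  have "tr (P * proj y) = (\<Sum>i<n. \<Sum>k<n. P $$ (i,k) * (y $ k * cnj (y $ i)))"
  proof -
    have py: "proj y \<in> carrier_mat n n" using y by (simp add: proj_def)
    have "tr (P * proj y) = (\<Sum>i<n. (P * proj y) $$ (i,i))" unfolding tr_def using P by simp
    also have "\<dots> = (\<Sum>i<n. \<Sum>k<n. P $$ (i,k) * proj y $$ (k,i))"
      by (intro sum.cong refl) (rule mm_entry[OF P py], simp_all)
    also have "\<dots> = (\<Sum>i<n. \<Sum>k<n. P $$ (i,k) * (y $ k * cnj (y $ i)))"
      using y by (intro sum.cong refl) (simp add: proj_def)
    finally show ?thesis .
  qed
  also have "\<dots> = Qf P y"
    unfolding Qf_def using y P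
    apply (intro sum.cong)
     apply simp
    apply (subst mv_entry[OF P y], simp)
    by (auto simp: sum_distrib_left ac_simps)
  finally show ?thesis unfolding e2 y_def .
qed

lemma ctrl_carrier[simp]: "ctrl N d Us x \<in> carrier_mat (N*d) (N*d)"
  unfolding ctrl_Bd by simp

lemma win_prob_pure:
  assumes \<psi>: "\<psi> \<in> carrier_vec (N*d)" and P: "P0 \<in> carrier_mat (N*d) (N*d)" "P1 \<in> carrier_mat (N*d) (N*d)"
  shows "win_prob N d v q (proj \<psi>) Us P0 P1 =
    Re (\<Sum>x\<in>bitstrings N. of_real (q x) * Qf (if v x then P1 else P0) (ctrl N d Us x *\<^sub>v \<psi>))"
  unfolding win_prob_def
proof (intro arg_cong[where f=Re] sum.cong refl)
  fix x
  have "(if v x then P1 else P0) \<in> carrier_mat (N*d) (N*d)" using P by simp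
  thus "complex_of_real (q x) * tr ((if v x then P1 else P0) * (ctrl N d Us x * proj \<psi> * adj (ctrl N d Us x))) =
         complex_of_real (q x) * Qf (if v x then P1 else P0) (ctrl N d Us x *\<^sub>v \<psi>)"
    using tr_proj_conj[OF ctrl_carrier \<psi>] by simp
qed

lemma ctrl_cong: "(\<And>i b. i < N \<Longrightarrow> Us i b = Us2 i b) \<Longrightarrow> ctrl N d Us x = ctrl N d Us2 x"
  unfolding ctrl_Bd by (rule Bd_cong) auto

lemma win_prob_cong: "(\<And>i b. i < N \<Longrightarrow> Us i b = Us2 i b) \<Longrightarrow>
   win_prob N d v q \<rho> Us P0 P1 = win_prob N d v q \<rho> Us2 P0 P1"
  unfolding win_prob_def using ctrl_cong[of N Us Us2 d] by simp

lemma prod_state_cong: "(\<And>i. i < N \<Longrightarrow> p i = p2 i) \<Longrightarrow> prod_state N d p \<chi> = prod_state N d p2 \<chi>"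
  unfolding prod_state_def
  by (rule eq_vecI) (auto dest: idx_decomp)

definition pz :: "(nat \<times> nat \<times> nat \<times> nat \<Rightarrow> complex) \<Rightarrow> nat \<Rightarrow> real" where
  "pz z i = Re (z (0,i,0,0))"
definition Uz :: "nat \<Rightarrow> (nat \<times> nat \<times> nat \<times> nat \<Rightarrow> complex) \<Rightarrow> nat \<Rightarrow> complex mat" where
  "Uz d z i = mat d d (\<lambda>(a,b). z (1,i,a,b))"
definition Pz :: "nat \<Rightarrow> nat \<Rightarrow> (nat \<times> nat \<times> nat \<times> nat \<Rightarrow> complex) \<Rightarrow> complex mat" where
  "Pz n t z = mat n n (\<lambda>(a,b). z (t,0,a,b))"

definition G :: "nat \<Rightarrow> nat \<Rightarrow> (bool list \<Rightarrow> bool) \<Rightarrow> (bool list \<Rightarrow> real) \<Rightarrow> (nat \<times> nat \<times> nat \<times> nat \<Rightarrow> complex) \<Rightarrow> real" where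
  "G N d v q z = win_prob N d v q (proj (prod_state N d (pz z) (unit_vec d 0)))
      (\<lambda>i b. if b then Uz d z i else 1\<^sub>m d) (Pz (N*d) 2 z) (Pz (N*d) 3 z)"

definition Fset :: "nat \<Rightarrow> nat \<Rightarrow> (nat \<times> nat \<times> nat \<times> nat \<Rightarrow> complex) set" where
  "Fset N d = {z. (\<forall>k. cmod (z k) \<le> 1) \<and> (\<forall>i<N. Im (z (0,i,0,0)) = 0 \<and> Re (z (0,i,0,0)) \<ge> 0)
     \<and> (\<Sum>i<N. Re (z (0,i,0,0))) = 1 \<and> (\<forall>i<N. unitary_mat d (Uz d z i))
     \<and> povm2 (N*d) (Pz (N*d) 2 z) (Pz (N*d) 3 z)}"

definition enc :: "nat \<Rightarrow> nat \<Rightarrow> (nat \<Rightarrow> real) \<Rightarrow> (nat \<Rightarrow> complex mat) \<Rightarrow> complex mat \<Rightarrow> complex mat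
    \<Rightarrow> (nat \<times> nat \<times> nat \<times> nat \<Rightarrow> complex)" where
  "enc N d p T Q0 Q1 = (\<lambda>(t,i,a,b).
     if t = 0 then (if a = 0 \<and> b = 0 \<and> i < N then of_real (p i) else 0)
     else if t = 1 then (if i < N \<and> a < d \<and> b < d then T i $$ (a,b) else 0)
     else if t = 2 then (if i = 0 \<and> a < N*d \<and> b < N*d then Q0 $$ (a,b) else 0)
     else if t = 3 then (if i = 0 \<and> a < N*d \<and> b < N*d then Q1 $$ (a,b) else 0)
     else 0)"

lemma enc_F:
  assumes p: "\<And>i. i < N \<Longrightarrow> p i \<ge> 0" and ps: "(\<Sum>i<N. p i) = 1"
    and T: "\<And>i. i < N \<Longrightarrow> unitary_mat d (T i)" and Q: "povm2 (N*d) Q0 Q1"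
  shows "enc N d p T Q0 Q1 \<in> Fset N d \<and>
    G N d v q (enc N d p T Q0 Q1) = win_prob N d v q (proj (prod_state N d p (unit_vec d 0)))
      (\<lambda>i b. if b then T i else 1\<^sub>m d) Q0 Q1"
proof -
  define z where "z = enc N d p T Q0 Q1"
  have QC: "Q0 \<in> carrier_mat (N*d) (N*d)" "Q1 \<in> carrier_mat (N*d) (N*d)" using povm_carrier[OF Q] by auto
  have p1: "p i \<le> 1" if i: "i < N" for i
  proof -
    have "p i \<le> (\<Sum>i<N. p i)" using i p by (intro member_le_sum) auto
    thus ?thesis using ps by simp
  qed
  have box: "cmod (z k) \<le> 1" for k
  proof -
    obtain t i a b where k: "k = (t,i,a,b)" by (cases k) auto
    show ?thesis
      using p1 p unitary_entry_le[OF T] povm_entry_le[OF Q]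
      unfolding k z_def enc_def by auto
  qed
  have pz: "pz z i = p i" if "i < N" for i using that unfolding z_def enc_def pz_def by simp
  have Uz: "Uz d z i = T i" if i: "i < N" for i
  proof -
    have "T i \<in> carrier_mat d d" using T[OF i] unitary_carrier by auto
    thus ?thesis unfolding z_def enc_def Uz_def using i by (intro eq_matI) auto
  qed
  have P2: "Pz (N*d) 2 z = Q0" unfolding z_def enc_def Pz_def using QC by (intro eq_matI) auto
  have P3: "Pz (N*d) 3 z = Q1" unfolding z_def enc_def Pz_def using QC by (intro eq_matI) auto
  have z0: "z (0,i,0,0) = of_real (p i)" if "i < N" for i using that unfolding z_def enc_def by simp
  have "(\<Sum>i<N. Re (z (0,i,0,0))) = (\<Sum>i<N. p i)" by (intro sum.cong) (auto simp: z0)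
  hence "z \<in> Fset N d"
    unfolding Fset_def using box p ps Uz T Q P2 P3 by (auto simp: z0)
  moreover have "G N d v q z = win_prob N d v q (proj (prod_state N d p (unit_vec d 0)))
      (\<lambda>i b. if b then T i else 1\<^sub>m d) Q0 Q1"
  proof -
    have ps': "prod_state N d (pz z) (unit_vec d 0) = prod_state N d p (unit_vec d 0)"
      by (rule prod_state_cong) (simp add: pz)
    show ?thesis unfolding G_def P2 P3 ps'
    by (rule win_prob_cong) (simp add: Uz)
  qed
  ultimately show ?thesis unfolding z_def by simp
qed

lemma nrm2_smult: "w \<in> carrier_vec n \<Longrightarrow> nrm2 n (c \<cdot>\<^sub>v w) = (cmod c)\<^sup>2 * nrm2 n w"
  unfolding nrm2_def sum_distrib_left by (intro sum.cong) (auto simp: norm_mult power_mult_distrib)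

lemma nrm2_e0: "0 < d \<Longrightarrow> nrm2 d (unit_vec d 0) = 1"
proof -
  assume d: "0 < d"
  have "nrm2 d (unit_vec d 0) = (\<Sum>a<d. if a = 0 then 1 else 0)"
    unfolding nrm2_def by (intro sum.cong) auto
  also have "\<dots> = 1" using d by (simp add: sum.delta)
  finally show ?thesis .
qed

lemma nrm2_nonneg: "nrm2 n w \<ge> 0"
  unfolding nrm2_def by (intro sum_nonneg) auto

lemma nrm2_zero: "nrm2 n w = 0 \<Longrightarrow> a < n \<Longrightarrow> w $ a = 0"
  unfolding nrm2_def by (subst (asm) sum_nonneg_eq_0_iff) auto

lemma nrm2_split: "nrm2 (N*d) \<psi> = (\<Sum>i<N. nrm2 d (blk d i \<psi>))"
  unfolding nrm2_def sum_split[where N=N and d=d] by (intro sum.cong) auto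

lemma pure_reduce:
  assumes d: "0 < d" and \<psi>: "\<psi> \<in> carrier_vec (N*d)" and n\<psi>: "nrm2 (N*d) \<psi> = 1"
    and Us: "\<forall>j<N. \<forall>b. unitary_mat d (Us j b)" and P: "povm2 (N*d) P0 P1"
  shows "\<exists>z\<in>Fset N d. win_prob N d v q (proj \<psi>) Us P0 P1 = G N d v q z"
proof -
  define e0 where "e0 = (unit_vec d 0 :: complex Matrix.vec)"
  have e0c: "e0 \<in> carrier_vec d" unfolding e0_def by simp
  define \<phi> where "\<phi> i = blk d i \<psi>" for i
  define p where "p i = nrm2 d (\<phi> i)" for i
  define nr where "nr i = sqrt (p i)" for i
  have UC: "Us i b \<in> carrier_mat d d" if "i < N" for i b using Us that unitary_carrier by auto
  define ub where "ub b i = (if nr i = 0 then e0 else of_real (1 / nr i) \<cdot>\<^sub>v (Us i b *\<^sub>v \<phi> i))" for b i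
  have \<phi>c: "\<phi> i \<in> carrier_vec d" for i unfolding \<phi>_def by simp
  have ubc: "ub b i \<in> carrier_vec d" if "i < N" for b i unfolding ub_def using e0c mult_mat_vec_carrier[OF UC[OF that] \<phi>c] by auto
  have p0: "p i \<ge> 0" for i unfolding p_def by (rule nrm2_nonneg)
  have ubn: "nrm2 d (ub b i) = 1" if i: "i < N" for b i
  proof (cases "nr i = 0")
    case True thus ?thesis unfolding ub_def e0_def using nrm2_e0[OF d] by simp
  next
    case False
    have "nrm2 d (ub b i) = (1 / nr i)\<^sup>2 * nrm2 d (Us i b *\<^sub>v \<phi> i)"
      unfolding ub_def using False by (simp add: nrm2_smult[OF mult_mat_vec_carrier[OF UC[OF i] \<phi>c]] norm_divide power_divide)
    also have "nrm2 d (Us i b *\<^sub>v \<phi> i) = p i" unfolding p_def using Us i \<phi>c by (simp add: unitary_norm)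
    also have "p i = (nr i)\<^sup>2" unfolding nr_def using p0 by simp
    finally show ?thesis using False by (simp add: power_divide)
  qed
  have key: "Us i b *\<^sub>v \<phi> i = of_real (nr i) \<cdot>\<^sub>v ub b i" if i: "i < N" for b i
  proof (cases "nr i = 0")
    case True
    hence "p i = 0" unfolding nr_def using p0 by simp
    hence z: "\<phi> i $ a = 0" if "a < d" for a using nrm2_zero[of d "\<phi> i" a] that unfolding p_def by simp
    show ?thesis
    proof (rule eq_vecI)
      fix a assume "a < dim_vec (of_real (nr i) \<cdot>\<^sub>v ub b i)"
      hence a: "a < d" using carrier_vecD[OF ubc[OF i, of b]] by simp
      show "(Us i b *\<^sub>v \<phi> i) $ a = (of_real (nr i) \<cdot>\<^sub>v ub b i) $ a"
        using True a carrier_vecD[OF ubc[OF i, of b]] by (simp add: mv_entry[OF UC[OF i] \<phi>c a] z)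
    qed (use carrier_matD[OF UC[OF i, of b]] carrier_vecD[OF ubc[OF i, of b]] in simp)
  next
    case False
    have "of_real (nr i) \<cdot>\<^sub>v ub b i = (of_real (nr i) * of_real (1 / nr i)) \<cdot>\<^sub>v (Us i b *\<^sub>v \<phi> i)"
      unfolding ub_def using False by (simp add: smult_smult_assoc)
    also have "of_real (nr i) * of_real (1 / nr i) = (1::complex)" using False by (simp flip: of_real_mult)
    finally show ?thesis by simp
  qed
  have "\<forall>i. \<exists>W. i < N \<longrightarrow> unitary_mat d W \<and> W *\<^sub>v e0 = ub False i"
  proof
    fix i show "\<exists>W. i < N \<longrightarrow> unitary_mat d W \<and> W *\<^sub>v e0 = ub False i"
    proof (cases "i < N")
      case True
      show ?thesis using house[OF ubc[OF True] d ubn[OF True, unfolded nrm2_def]] unfolding e0_def by blast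
    qed auto
  qed
  then obtain Wb where Wb: "\<And>i. i < N \<Longrightarrow> unitary_mat d (Wb i) \<and> Wb i *\<^sub>v e0 = ub False i"
    by metis
  have WbC: "Wb i \<in> carrier_mat d d" if "i < N" for i using Wb[OF that] unitary_carrier by auto
  define t where "t i = adj (Wb i) *\<^sub>v ub True i" for i
  have tc: "t i \<in> carrier_vec d" if "i < N" for i unfolding t_def using mult_mat_vec_carrier[OF adj_carrier[OF WbC[OF that]] ubc[OF that]] .
  have tn: "nrm2 d (t i) = 1" if i: "i < N" for i
    unfolding t_def using unitary_norm[OF unitary_adj ubc[OF i]] Wb[OF i] ubn[OF i] by simp
  have "\<forall>i. \<exists>W. i < N \<longrightarrow> unitary_mat d W \<and> W *\<^sub>v e0 = t i"
  proof
    fix i show "\<exists>W. i < N \<longrightarrow> unitary_mat d W \<and> W *\<^sub>v e0 = t i"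
    proof (cases "i < N")
      case True
      show ?thesis using house[OF tc[OF True] d tn[OF True, unfolded nrm2_def]] unfolding e0_def by blast
    qed auto
  qed
  then obtain T where T: "\<And>i. i < N \<Longrightarrow> unitary_mat d (T i) \<and> T i *\<^sub>v e0 = t i"
    by metis
  have TC: "T i \<in> carrier_mat d d" if "i < N" for i using T[OF that] unitary_carrier by auto
  define Us' where "Us' i b = (if b then T i else 1\<^sub>m d)" for i b
  have UC': "Us' i b \<in> carrier_mat d d" if "i < N" for i b unfolding Us'_def using TC[OF that] by simp
  define W where "W = Bd N d Wb"
  have WU: "unitary_mat (N*d) W" unfolding W_def by (rule Bd_unitary) (use Wb in auto)
  have WC: "W \<in> carrier_mat (N*d) (N*d)" unfolding W_def by simp
  define \<psi>' where "\<psi>' = prod_state N d p e0"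
  have \<psi>'c: "\<psi>' \<in> carrier_vec (N*d)" unfolding \<psi>'_def prod_state_def by simp
  have blk\<psi>': "blk d i \<psi>' = of_real (nr i) \<cdot>\<^sub>v e0" if i: "i < N" for i
    by (rule eq_vecI) (use i e0c in \<open>auto simp: \<psi>'_def prod_state_def nr_def idx_lt\<close>)
  have ubF: "Wb i *\<^sub>v (Us' i b *\<^sub>v e0) = ub b i" if i: "i < N" for i b
  proof (cases b)
    case True
    have "Wb i *\<^sub>v (Us' i b *\<^sub>v e0) = Wb i *\<^sub>v (adj (Wb i) *\<^sub>v ub True i)"
      using True T[OF i] unfolding Us'_def t_def by simp
    also have "\<dots> = (Wb i * adj (Wb i)) *\<^sub>v ub True i"
      using assoc_mult_mat_vec[OF WbC[OF i] adj_carrier[OF WbC[OF i]] ubc[OF i]] by simp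
    also have "\<dots> = ub True i" using Wb[OF i] ubc[OF i] unfolding unitary_mat_def by simp
    finally show ?thesis using True by simp
  next
    case False
    thus ?thesis using Wb[OF i] e0c unfolding Us'_def by simp
  qed
  have vecc: "ctrl N d Us x *\<^sub>v \<psi> = W *\<^sub>v (ctrl N d Us' x *\<^sub>v \<psi>')" for x
  proof (rule vec_blk_eqI[of _ N d])
    show "ctrl N d Us x *\<^sub>v \<psi> \<in> carrier_vec (N*d)" using mult_mat_vec_carrier[OF ctrl_carrier \<psi>] .
    show "W *\<^sub>v (ctrl N d Us' x *\<^sub>v \<psi>') \<in> carrier_vec (N*d)"
      using mult_mat_vec_carrier[OF WC mult_mat_vec_carrier[OF ctrl_carrier \<psi>'c]] .
    fix i a assume i: "i < N" and a: "a < d"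
    have "(ctrl N d Us x *\<^sub>v \<psi>) $ (i*d+a) = (Us i (x!i) *\<^sub>v \<phi> i) $ a"
      unfolding ctrl_Bd \<phi>_def by (rule Bd_mv[where F="\<lambda>i. Us i (x!i)", OF UC[OF i] \<psi> i a])
    also have "\<dots> = (of_real (nr i) \<cdot>\<^sub>v ub (x!i) i) $ a" by (simp add: key[OF i])
    finally have L: "(ctrl N d Us x *\<^sub>v \<psi>) $ (i*d+a) = (of_real (nr i) \<cdot>\<^sub>v ub (x!i) i) $ a" .
    have bl: "blk d i (ctrl N d Us' x *\<^sub>v \<psi>') = Us' i (x!i) *\<^sub>v blk d i \<psi>'"
    proof (rule eq_vecI)
      fix c assume "c < dim_vec (Us' i (x!i) *\<^sub>v blk d i \<psi>')"
      hence c: "c < d" using carrier_matD[OF UC'[OF i, of "x!i"]] by simp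
      show "blk d i (ctrl N d Us' x *\<^sub>v \<psi>') $ c = (Us' i (x!i) *\<^sub>v blk d i \<psi>') $ c"
        unfolding blk_index[OF c] ctrl_Bd by (rule Bd_mv[where F="\<lambda>i. Us' i (x!i)", OF UC'[OF i] \<psi>'c i c])
    qed (use carrier_matD[OF UC'[OF i, of "x!i"]] in simp)
    have "(W *\<^sub>v (ctrl N d Us' x *\<^sub>v \<psi>')) $ (i*d+a) = (Wb i *\<^sub>v blk d i (ctrl N d Us' x *\<^sub>v \<psi>')) $ a"
      unfolding W_def by (rule Bd_mv[where F=Wb, OF WbC[OF i] mult_mat_vec_carrier[OF ctrl_carrier \<psi>'c] i a])
    also have "Wb i *\<^sub>v blk d i (ctrl N d Us' x *\<^sub>v \<psi>') = Wb i *\<^sub>v (Us' i (x!i) *\<^sub>v (of_real (nr i) \<cdot>\<^sub>v e0))"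
      unfolding bl blk\<psi>'[OF i] ..
    also have "\<dots> = of_real (nr i) \<cdot>\<^sub>v (Wb i *\<^sub>v (Us' i (x!i) *\<^sub>v e0))"
      using mult_mat_vec[OF UC'[OF i, of "x!i"] e0c] mult_mat_vec[OF WbC[OF i] mult_mat_vec_carrier[OF UC'[OF i, of "x!i"] e0c]] by simp
    also have "\<dots> = of_real (nr i) \<cdot>\<^sub>v ub (x!i) i" by (simp add: ubF[OF i])
    finally show "(ctrl N d Us x *\<^sub>v \<psi>) $ (i*d+a) = (W *\<^sub>v (ctrl N d Us' x *\<^sub>v \<psi>')) $ (i*d+a)"
      using L by simp
  qed
  define P0' where "P0' = adj W * P0 * W"
  define P1' where "P1' = adj W * P1 * W"
  have PC: "P0 \<in> carrier_mat (N*d) (N*d)" "P1 \<in> carrier_mat (N*d) (N*d)" using povm_carrier[OF P] by auto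
  have P': "povm2 (N*d) P0' P1'" unfolding P0'_def P1'_def by (rule povm_conj[OF P WU])
  have P'C: "P0' \<in> carrier_mat (N*d) (N*d)" "P1' \<in> carrier_mat (N*d) (N*d)" using povm_carrier[OF P'] by auto
  have "win_prob N d v q (proj \<psi>) Us P0 P1 =
      Re (\<Sum>x\<in>bitstrings N. of_real (q x) * Qf (if v x then P1 else P0) (ctrl N d Us x *\<^sub>v \<psi>))"
    by (rule win_prob_pure[OF \<psi> PC])
  also have "\<dots> = Re (\<Sum>x\<in>bitstrings N. of_real (q x) * Qf (if v x then P1' else P0') (ctrl N d Us' x *\<^sub>v \<psi>'))"
  proof (intro arg_cong[where f=Re] sum.cong refl)
    fix x
    have Pc: "(if v x then P1 else P0) \<in> carrier_mat (N*d) (N*d)" using PC by simp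
    have "Qf (if v x then P1 else P0) (ctrl N d Us x *\<^sub>v \<psi>) = Qf (adj W * (if v x then P1 else P0) * W) (ctrl N d Us' x *\<^sub>v \<psi>')"
      unfolding vecc by (rule Qf_adj[OF WC Pc mult_mat_vec_carrier[OF ctrl_carrier \<psi>'c]])
    also have "adj W * (if v x then P1 else P0) * W = (if v x then P1' else P0')"
      unfolding P0'_def P1'_def by simp
    finally show "of_real (q x) * Qf (if v x then P1 else P0) (ctrl N d Us x *\<^sub>v \<psi>) =
        of_real (q x) * Qf (if v x then P1' else P0') (ctrl N d Us' x *\<^sub>v \<psi>')" by simp
  qed
  also have "\<dots> = win_prob N d v q (proj \<psi>') Us' P0' P1'"
    by (rule win_prob_pure[OF \<psi>'c P'C, symmetric])
  finally have eq: "win_prob N d v q (proj \<psi>) Us P0 P1 = win_prob N d v q (proj \<psi>') Us' P0' P1'" .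
  have ps: "(\<Sum>i<N. p i) = 1" using n\<psi> unfolding nrm2_split p_def \<phi>_def .
  have "enc N d p T P0' P1' \<in> Fset N d \<and>
    G N d v q (enc N d p T P0' P1') = win_prob N d v q (proj (prod_state N d p (unit_vec d 0)))
      (\<lambda>i b. if b then T i else 1\<^sub>m d) P0' P1'"
    by (rule enc_F[OF _ ps _ P']) (use p0 T in auto)
  thus ?thesis unfolding eq \<psi>'_def e0_def Us'_def by metis
qed

lemma tr_add: "A \<in> carrier_mat n n \<Longrightarrow> B \<in> carrier_mat n n \<Longrightarrow> tr (A + B) = tr A + tr B"
  unfolding tr_def by (simp add: sum.distrib)

lemma tr_smult: "A \<in> carrier_mat n n \<Longrightarrow> tr (c \<cdot>\<^sub>m A) = c * tr A"
  unfolding tr_def sum_distrib_left by (intro sum.cong) auto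

lemma conj_carrier: "C \<in> carrier_mat n n \<Longrightarrow> A \<in> carrier_mat n n \<Longrightarrow> C * A * adj C \<in> carrier_mat n n"
  by (metis adj_carrier mult_carrier_mat)

lemma wp_add:
  assumes A: "A \<in> carrier_mat (N*d) (N*d)" and B: "B \<in> carrier_mat (N*d) (N*d)"
    and P: "P0 \<in> carrier_mat (N*d) (N*d)" "P1 \<in> carrier_mat (N*d) (N*d)"
  shows "win_prob N d v q (A + B) Us P0 P1 = win_prob N d v q A Us P0 P1 + win_prob N d v q B Us P0 P1"
proof -
  have e: "tr (Pm * (C * (A + B) * adj C)) = tr (Pm * (C * A * adj C)) + tr (Pm * (C * B * adj C))"
    if Pm: "Pm \<in> carrier_mat (N*d) (N*d)" and C: "C \<in> carrier_mat (N*d) (N*d)" for Pm C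
  proof -
    have "C * (A + B) = C * A + C * B" by (rule mult_add_distrib_mat[OF C A B])
    moreover have "(C * A + C * B) * adj C = C * A * adj C + C * B * adj C"
      by (rule add_mult_distrib_mat[OF mult_carrier_mat[OF C A] mult_carrier_mat[OF C B] adj_carrier[OF C]])
    ultimately have "C * (A + B) * adj C = C * A * adj C + C * B * adj C" by simp
    hence "Pm * (C * (A + B) * adj C) = Pm * (C * A * adj C) + Pm * (C * B * adj C)"
      using mult_add_distrib_mat[OF Pm conj_carrier[OF C A] conj_carrier[OF C B]] by simp
    thus ?thesis using tr_add[OF mult_carrier_mat[OF Pm conj_carrier[OF C A]] mult_carrier_mat[OF Pm conj_carrier[OF C B]]] by simp
  qed
  show ?thesis unfolding win_prob_def
    by (simp add: e P sum.distrib[symmetric] algebra_simps del: index_mult_mat)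
qed

lemma wp_smult:
  assumes A: "A \<in> carrier_mat (N*d) (N*d)" and P: "P0 \<in> carrier_mat (N*d) (N*d)" "P1 \<in> carrier_mat (N*d) (N*d)"
  shows "win_prob N d v q (of_real c \<cdot>\<^sub>m A) Us P0 P1 = c * win_prob N d v q A Us P0 P1"
proof -
  have e: "tr (Pm * (C * (of_real c \<cdot>\<^sub>m A) * adj C)) = of_real c * tr (Pm * (C * A * adj C))"
    if Pm: "Pm \<in> carrier_mat (N*d) (N*d)" and C: "C \<in> carrier_mat (N*d) (N*d)" for Pm C
  proof -
    have "C * (of_real c \<cdot>\<^sub>m A) * adj C = of_real c \<cdot>\<^sub>m (C * A * adj C)"
      using mult_smult_distrib[OF C A] mult_smult_assoc_mat[OF mult_carrier_mat[OF C A] adj_carrier[OF C]] by simp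
    hence "Pm * (C * (of_real c \<cdot>\<^sub>m A) * adj C) = of_real c \<cdot>\<^sub>m (Pm * (C * A * adj C))"
      using mult_smult_distrib[OF Pm conj_carrier[OF C A]] by simp
    thus ?thesis using tr_smult[OF mult_carrier_mat[OF Pm conj_carrier[OF C A]]] by simp
  qed
  have "win_prob N d v q (of_real c \<cdot>\<^sub>m A) Us P0 P1 =
     Re (of_real c * (\<Sum>x\<in>bitstrings N. complex_of_real (q x) *
          tr ((if v x then P1 else P0) * (ctrl N d Us x * A * adj (ctrl N d Us x)))))"
    unfolding win_prob_def sum_distrib_left
    by (intro arg_cong[where f=Re] sum.cong refl) (simp add: e P algebra_simps del: index_mult_mat)
  thus ?thesis unfolding win_prob_def by simp
qed

lemma proj_carrier[simp]: "\<psi> \<in> carrier_vec n \<Longrightarrow> proj \<psi> \<in> carrier_mat n n"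
  unfolding proj_def by simp

lemma tr_proj: "\<psi> \<in> carrier_vec n \<Longrightarrow> tr (proj \<psi>) = of_real (nrm2 n \<psi>)"
  unfolding tr_def nrm2_def proj_def of_real_sum
  by (intro sum.cong) (auto simp: complex_norm_square simp flip: of_real_power)

lemma pure_any:
  assumes \<psi>: "\<psi> \<in> carrier_vec (N*d)" and P: "P0 \<in> carrier_mat (N*d) (N*d)" "P1 \<in> carrier_mat (N*d) (N*d)"
    and H: "\<And>\<phi>. \<phi> \<in> carrier_vec (N*d) \<Longrightarrow> nrm2 (N*d) \<phi> = 1 \<Longrightarrow> win_prob N d v q (proj \<phi>) Us P0 P1 \<le> M"
  shows "win_prob N d v q (proj \<psi>) Us P0 P1 \<le> M * nrm2 (N*d) \<psi>"
proof (cases "nrm2 (N*d) \<psi> = 0")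
  case True
  have "proj \<psi> = of_real 0 \<cdot>\<^sub>m proj \<psi>"
    using nrm2_zero[OF True] \<psi> by (intro eq_matI) (auto simp: proj_def)
  hence "win_prob N d v q (proj \<psi>) Us P0 P1 = 0 * win_prob N d v q (proj \<psi>) Us P0 P1"
    using wp_smult[OF proj_carrier[OF \<psi>] P, of v q 0 Us] by metis
  thus ?thesis using True by simp
next
  case False
  define s where "s = sqrt (nrm2 (N*d) \<psi>)"
  have s0: "s > 0" unfolding s_def using False nrm2_nonneg[of "N*d" \<psi>] by simp
  have ss: "s * s = nrm2 (N*d) \<psi>" unfolding s_def using nrm2_nonneg[of "N*d" \<psi>] by simp
  define \<phi> where "\<phi> = of_real (1/s) \<cdot>\<^sub>v \<psi>"
  have \<phi>c: "\<phi> \<in> carrier_vec (N*d)" unfolding \<phi>_def using \<psi> by simp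
  have n\<phi>: "nrm2 (N*d) \<phi> = 1" unfolding \<phi>_def nrm2_smult[OF \<psi>] using s0 ss False
    by (simp add: norm_divide power2_eq_square)
  have "proj \<psi> = of_real (s * s) \<cdot>\<^sub>m proj \<phi>"
    using \<psi> s0 unfolding \<phi>_def by (intro eq_matI) (auto simp: proj_def field_simps)
  hence "win_prob N d v q (proj \<psi>) Us P0 P1 = (s * s) * win_prob N d v q (proj \<phi>) Us P0 P1"
    using wp_smult[OF proj_carrier[OF \<phi>c] P, of v q "s*s" Us] by metis
  also have "\<dots> \<le> (s * s) * M" using H[OF \<phi>c n\<phi>] s0 by (intro mult_left_mono) auto
  finally show ?thesis using ss by (simp add: mult.commute)
qed

lemma Qf_shift:
  assumes A: "A \<in> carrier_mat n n" and w: "w \<in> carrier_vec n" and m: "m < n"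
  shows "Qf A (vec n (\<lambda>k. w $ k + (if k = m then s else 0))) =
    Qf A w + s * (\<Sum>i<n. cnj (w $ i) * A $$ (i,m)) + cnj s * (A *\<^sub>v w) $ m + cnj s * s * A $$ (m,m)"
proof -
  define w' where "w' = vec n (\<lambda>k. w $ k + (if k = m then s else 0))"
  have w'c: "w' \<in> carrier_vec n" unfolding w'_def by simp
  have w'i: "w' $ i = w $ i + (if i = m then s else 0)" if "i < n" for i using that unfolding w'_def by simp
  have mv: "(A *\<^sub>v w') $ i = (A *\<^sub>v w) $ i + A $$ (i,m) * s" if i: "i < n" for i
  proof -
    have "(A *\<^sub>v w') $ i = (\<Sum>k<n. A $$ (i,k) * w $ k + A $$ (i,k) * s * (if k = m then 1 else 0))"
      unfolding mv_entry[OF A w'c i] using w by (intro sum.cong) (auto simp: w'_def algebra_simps)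
    also have "\<dots> = (A *\<^sub>v w) $ i + A $$ (i,m) * s"
      unfolding sum.distrib sum_delta_r[OF m] mv_entry[OF A w i] ..
    finally show ?thesis .
  qed
  have "Qf A w' = (\<Sum>i<n. cnj (w $ i) * (A *\<^sub>v w) $ i + s * (cnj (w $ i) * A $$ (i,m))
      + (if m = i then 1 else 0) * (cnj s * ((A *\<^sub>v w) $ i + A $$ (i,m) * s)))"
    unfolding Qf_def using w w'c by (intro sum.cong) (auto simp: w'_def[symmetric] mv algebra_simps w'i)
  also have "\<dots> = Qf A w + s * (\<Sum>i<n. cnj (w $ i) * A $$ (i,m)) + cnj s * ((A *\<^sub>v w) $ m + A $$ (m,m) * s)"
    unfolding sum.distrib sum_delta_l[OF m] Qf_def sum_distrib_left using w by simp
  finally show ?thesis unfolding w'_def by (simp add: algebra_simps)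
qed

lemma abstract_mixed:
  fixes L :: "complex mat \<Rightarrow> real"
  assumes add: "\<And>A B. A \<in> carrier_mat n n \<Longrightarrow> B \<in> carrier_mat n n \<Longrightarrow> L (A + B) = L A + L B"
    and smult: "\<And>A c. A \<in> carrier_mat n n \<Longrightarrow> L (of_real c \<cdot>\<^sub>m A) = c * L A"
    and pure: "\<And>\<psi>. \<psi> \<in> carrier_vec n \<Longrightarrow> L (proj \<psi>) \<le> M * nrm2 n \<psi>"
    and \<rho>: "psd n \<rho>"
  shows "L \<rho> \<le> M * Re (tr \<rho>)"
proof -
  have main: "\<forall>\<rho>. psd n \<rho> \<longrightarrow> (\<forall>i<n. \<forall>j<n. (i < m \<or> j < m) \<longrightarrow> \<rho> $$ (i,j) = 0) \<longrightarrow> L \<rho> \<le> M * Re (tr \<rho>)"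
    if "m \<le> n" for m
    using that
  proof (induction m rule: inc_induct)
    case base
    show ?case
    proof (intro allI impI)
      fix \<rho> assume ps: "psd n \<rho>" and Z: "\<forall>i<n. \<forall>j<n. (i < n \<or> j < n) \<longrightarrow> \<rho> $$ (i,j) = 0"
      have C: "\<rho> \<in> carrier_mat n n" using ps psd_Qf by auto
      have e: "\<rho> = of_real 0 \<cdot>\<^sub>m \<rho>" using C Z by (intro eq_matI) auto
      have "L \<rho> = L (of_real 0 \<cdot>\<^sub>m \<rho>)" by (rule arg_cong[OF e])
      also have "\<dots> = 0" using smult[OF C, of 0] by simp
      finally have "L \<rho> = 0" .
      moreover have "tr \<rho> = 0" unfolding tr_def using C Z by (intro sum.neutral) auto
      ultimately show "L \<rho> \<le> M * Re (tr \<rho>)" by simp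
    qed
  next
    case (step m)
    show ?case
    proof (intro allI impI)
      fix \<rho> assume ps: "psd n \<rho>" and Z: "\<forall>i<n. \<forall>j<n. (i < m \<or> j < m) \<longrightarrow> \<rho> $$ (i,j) = 0"
      have C: "\<rho> \<in> carrier_mat n n" using ps psd_Qf by auto
      have m: "m < n" using step by simp
      define r where "r = Re (\<rho> $$ (m,m))"
      have rr: "\<rho> $$ (m,m) = of_real r" using psd_diag[OF ps m] unfolding r_def by (simp add: complex_eq_iff)
      have r0: "r \<ge> 0" using psd_diag[OF ps m] unfolding r_def by simp
      have herm: "\<rho> $$ (j,i) = cnj (\<rho> $$ (i,j))" if "i < n" "j < n" for i j using psd_herm[OF ps that] .
      show "L \<rho> \<le> M * Re (tr \<rho>)"
      proof (cases "r = 0")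
        case True
        have row: "\<rho> $$ (m,j) = 0" if j: "j < n" for j
        proof -
          have "(cmod (\<rho> $$ (m,j)))\<^sup>2 \<le> 0" using psd_cs[OF ps m j] True r_def by simp
          thus ?thesis by simp
        qed
        have "\<forall>i<n. \<forall>j<n. (i < Suc m \<or> j < Suc m) \<longrightarrow> \<rho> $$ (i,j) = 0"
        proof (intro allI impI)
          fix i j assume i: "i < n" and j: "j < n" and ij: "i < Suc m \<or> j < Suc m"
          show "\<rho> $$ (i,j) = 0"
          proof (cases "i < m \<or> j < m")
            case True thus ?thesis using Z i j by auto
          next
            case False
            hence "i = m \<or> j = m" using ij by auto
            thus ?thesis using row[OF j] row[OF i] herm[OF m i] by auto
          qed
        qed
        thus ?thesis using step.IH ps by blast
      next
        case False
        hence rp: "r > 0" using r0 by simp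
        define c where "c = vec n (\<lambda>i. \<rho> $$ (i,m))"
        have cc: "c \<in> carrier_vec n" unfolding c_def by simp
        define \<rho>' where "\<rho>' = mat n n (\<lambda>(i,j). \<rho> $$ (i,j) - \<rho> $$ (i,m) * cnj (\<rho> $$ (j,m)) / of_real r)"
        have \<rho>'C: "\<rho>' \<in> carrier_mat n n" unfolding \<rho>'_def by simp
        have pcC: "of_real (1/r) \<cdot>\<^sub>m proj c \<in> carrier_mat n n" using cc by simp
        have dec: "\<rho> = \<rho>' + of_real (1/r) \<cdot>\<^sub>m proj c"
          using C cc by (intro eq_matI) (auto simp: \<rho>'_def proj_def c_def)
        have Z': "\<forall>i<n. \<forall>j<n. (i < Suc m \<or> j < Suc m) \<longrightarrow> \<rho>' $$ (i,j) = 0"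
        proof (intro allI impI)
          fix i j assume i: "i < n" and j: "j < n" and ij: "i < Suc m \<or> j < Suc m"
          show "\<rho>' $$ (i,j) = 0"
          proof (cases "i < m \<or> j < m")
            case True
            thus ?thesis using Z i j m by (auto simp: \<rho>'_def)
          next
            case False
            hence "i = m \<or> j = m" using ij by auto
            thus ?thesis
            proof
              assume im: "i = m"
              have "\<rho> $$ (m,j) = cnj (\<rho> $$ (j,m))" using herm[OF j m] .
              thus ?thesis using im i j rp by (simp add: \<rho>'_def rr)
            next
              assume jm: "j = m"
              thus ?thesis using i j rp by (simp add: \<rho>'_def rr)
            qed
          qed
        qed
        have psd': "psd n \<rho>'"
          unfolding psd_Qf
        proof (rule conjI[OF \<rho>'C], intro ballI)
          fix w :: "complex Matrix.vec" assume w: "w \<in> carrier_vec n"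
          define a where "a = (\<rho> *\<^sub>v w) $ m"
          have a_sum: "a = (\<Sum>j<n. \<rho> $$ (m,j) * w $ j)" unfolding a_def by (rule mv_entry[OF C w m])
          have ca: "(\<Sum>i<n. cnj (w $ i) * \<rho> $$ (i,m)) = cnj a"
            unfolding a_sum cnj_sum using herm[OF m] by (intro sum.cong) auto
          have mv': "(\<rho>' *\<^sub>v w) $ i = (\<rho> *\<^sub>v w) $ i - \<rho> $$ (i,m) * a / of_real r" if i: "i < n" for i
          proof -
            have "(\<rho>' *\<^sub>v w) $ i = (\<Sum>j<n. \<rho> $$ (i,j) * w $ j - \<rho> $$ (i,m) / of_real r * (\<rho> $$ (m,j) * w $ j))"
              unfolding mv_entry[OF \<rho>'C w i] using i herm[OF _ m]
              by (intro sum.cong) (auto simp: \<rho>'_def field_simps)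
            also have "\<dots> = (\<rho> *\<^sub>v w) $ i - \<rho> $$ (i,m) * a / of_real r"
              unfolding sum_subtractf mv_entry[OF C w i] a_sum sum_distrib_left[symmetric] by simp
            finally show ?thesis .
          qed
          have q1: "Qf \<rho>' w = Qf \<rho> w - cnj a * a / of_real r"
          proof -
            have "Qf \<rho>' w = (\<Sum>i<n. cnj (w $ i) * (\<rho> *\<^sub>v w) $ i - (cnj (w $ i) * \<rho> $$ (i,m)) * (a / of_real r))"
              unfolding Qf_def using w by (intro sum.cong) (auto simp: mv' algebra_simps)
            also have "\<dots> = Qf \<rho> w - cnj a * a / of_real r"
              unfolding sum_subtractf sum_distrib_right[symmetric] ca Qf_def using w by simp
            finally show ?thesis .
          qed
          define s where "s = - a / of_real r"
          have q2: "Qf \<rho> (vec n (\<lambda>k. w $ k + (if k = m then s else 0))) = Qf \<rho> w - cnj a * a / of_real r"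
            unfolding Qf_shift[OF C w m] ca a_def[symmetric] rr s_def using rp
            by (simp add: field_simps)
          have "Qf \<rho>' w = Qf \<rho> (vec n (\<lambda>k. w $ k + (if k = m then s else 0)))" using q1 q2 by simp
          thus "Im (Qf \<rho>' w) = 0 \<and> 0 \<le> Re (Qf \<rho>' w)"
            using psd_QfD[OF ps, of "vec n (\<lambda>k. w $ k + (if k = m then s else 0))"] by simp
        qed
        have "L \<rho> = L \<rho>' + (1/r) * L (proj c)"
          using dec add[OF \<rho>'C pcC] smult[OF proj_carrier[OF cc], of "1/r"] by metis
        also have "\<dots> \<le> M * Re (tr \<rho>') + (1/r) * (M * nrm2 n c)"
          using step.IH psd' Z' pure[OF cc] rp by (intro add_mono mult_left_mono) auto
        also have "\<dots> = M * Re (tr \<rho>)"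
        proof -
          have "tr \<rho> = tr \<rho>' + of_real (1/r) * of_real (nrm2 n c)"
            using dec tr_add[OF \<rho>'C pcC] tr_smult[OF proj_carrier[OF cc]] tr_proj[OF cc] by metis
          hence "Re (tr \<rho>) = Re (tr \<rho>') + (1/r) * nrm2 n c" by (simp flip: of_real_mult)
          thus ?thesis by (simp add: algebra_simps)
        qed
        finally show ?thesis .
      qed
    qed
  qed
  show ?thesis using main[of 0] \<rho> by simp
qed

type_synonym key = "nat \<times> nat \<times> nat \<times> nat"

lemma cont_coord[continuous_intros]: "continuous_on S (\<lambda>z::key \<Rightarrow> complex. z k)"
  by (rule continuous_on_subset[OF continuous_on_product_coordinates]) simp

lemma cont_if_const[continuous_intros]:
  "continuous_on S f \<Longrightarrow> continuous_on S g \<Longrightarrow> continuous_on S (\<lambda>z. if c then f z else g z)"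
  by (cases c) auto

definition psiz :: "nat \<Rightarrow> (key \<Rightarrow> complex) \<Rightarrow> nat \<Rightarrow> complex" where
  "psiz d z k = of_real (sqrt (Re (z (0, k div d, 0, 0)))) * (if k mod d = 0 then 1 else 0)"

definition Ez :: "nat \<Rightarrow> bool list \<Rightarrow> (key \<Rightarrow> complex) \<Rightarrow> nat \<Rightarrow> nat \<Rightarrow> complex" where
  "Ez d x z r k = (if r div d = k div d then (if x ! (r div d) then z (1, r div d, r mod d, k mod d)
      else (if r mod d = k mod d then 1 else 0)) else 0)"

definition Yz :: "nat \<Rightarrow> nat \<Rightarrow> bool list \<Rightarrow> (key \<Rightarrow> complex) \<Rightarrow> nat \<Rightarrow> complex" where
  "Yz N d x z r = (\<Sum>k<N*d. Ez d x z r k * psiz d z k)"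

definition Gexp :: "nat \<Rightarrow> nat \<Rightarrow> (bool list \<Rightarrow> bool) \<Rightarrow> (bool list \<Rightarrow> real) \<Rightarrow> (key \<Rightarrow> complex) \<Rightarrow> real" where
  "Gexp N d v q z = Re (\<Sum>x\<in>bitstrings N. of_real (q x) * (\<Sum>a<N*d. cnj (Yz N d x z a) *
      (\<Sum>b<N*d. z (if v x then 3 else 2, 0, a, b) * Yz N d x z b)))"

lemma Gexp_cont: "continuous_on S (Gexp N d v q)"
  unfolding Gexp_def Yz_def Ez_def psiz_def
  by (intro continuous_intros)

lemma G_Gexp:
  assumes d: "0 < d"
  shows "G N d v q z = Gexp N d v q z"
proof -
  define \<psi> where "\<psi> = prod_state N d (pz z) (unit_vec d 0)"
  have \<psi>c: "\<psi> \<in> carrier_vec (N*d)" unfolding \<psi>_def prod_state_def by simp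
  have PC: "Pz (N*d) t z \<in> carrier_mat (N*d) (N*d)" for t unfolding Pz_def by simp
  define Usz where "Usz = (\<lambda>i b. if b then Uz d z i else 1\<^sub>m d)"
  have Y: "(ctrl N d Usz x *\<^sub>v \<psi>) $ r = Yz N d x z r" if r: "r < N*d" for x r
    unfolding mv_entry[OF ctrl_carrier \<psi>c r] Yz_def
  proof (intro sum.cong refl)
    fix k assume k: "k \<in> {..<N*d}"
    have md: "r mod d < d" "k mod d < d" using d by auto
    show "ctrl N d Usz x $$ (r, k) * \<psi> $ k = Ez d x z r k * psiz d z k"
      using r k md unfolding ctrl_def Usz_def Ez_def \<psi>_def prod_state_def psiz_def pz_def Uz_def
      by auto
  qed
  have "G N d v q z = Re (\<Sum>x\<in>bitstrings N. of_real (q x) *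
      Qf (if v x then Pz (N*d) 3 z else Pz (N*d) 2 z) (ctrl N d Usz x *\<^sub>v \<psi>))"
    unfolding G_def \<psi>_def[symmetric] Usz_def[symmetric] by (rule win_prob_pure[OF \<psi>c PC PC])
  also have "\<dots> = Gexp N d v q z"
    unfolding Gexp_def
  proof (intro arg_cong[where f=Re] sum.cong refl arg_cong[where f="(*) _"])
    fix x
    have yc: "ctrl N d Usz x *\<^sub>v \<psi> \<in> carrier_vec (N*d)" using mult_mat_vec_carrier[OF ctrl_carrier \<psi>c] .
    have PC': "(if v x then Pz (N*d) 3 z else Pz (N*d) 2 z) \<in> carrier_mat (N*d) (N*d)" using PC by simp
    show "Qf (if v x then Pz (N*d) 3 z else Pz (N*d) 2 z) (ctrl N d Usz x *\<^sub>v \<psi>) =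
      (\<Sum>a<N*d. cnj (Yz N d x z a) * (\<Sum>b<N*d. z (if v x then 3 else 2, 0, a, b) * Yz N d x z b))"
      unfolding Qf_def
    proof (rule sum.cong)
      show "{..<dim_vec (ctrl N d Usz x *\<^sub>v \<psi>)} = {..<N*d}" using carrier_vecD[OF yc] by simp
      fix a assume a: "a \<in> {..<N*d}"
      show "cnj ((ctrl N d Usz x *\<^sub>v \<psi>) $ a) * ((if v x then Pz (N*d) 3 z else Pz (N*d) 2 z) *\<^sub>v (ctrl N d Usz x *\<^sub>v \<psi>)) $ a =
         cnj (Yz N d x z a) * (\<Sum>b<N*d. z (if v x then 3 else 2, 0, a, b) * Yz N d x z b)"
        using a by (subst mv_entry[OF PC' yc]) (auto simp: Y Pz_def intro!: sum.cong)
    qed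
  qed
  finally show ?thesis .
qed

lemma compact_cball_complex: "compact (cball (0::complex) 1)"
proof -
  define K where "K = (\<lambda>p::real\<times>real. complex_of_real (fst p) + \<i> * complex_of_real (snd p)) ` ({-1..1} \<times> {-1..1})"
  have "compact K" unfolding K_def
    by (intro compact_continuous_image compact_Times compact_Icc continuous_intros)
  moreover have "cball (0::complex) 1 \<subseteq> K"
  proof
    fix z :: complex assume "z \<in> cball 0 1"
    hence z: "cmod z \<le> 1" by simp
    have "\<bar>Re z\<bar> \<le> 1" "\<bar>Im z\<bar> \<le> 1" using abs_Re_le_cmod[of z] abs_Im_le_cmod[of z] z by linarith+
    hence "(Re z, Im z) \<in> {-1..1} \<times> {-1..1}" by auto
    moreover have "z = complex_of_real (Re z) + \<i> * complex_of_real (Im z)" by (simp add: complex_eq_iff)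
    ultimately show "z \<in> K" unfolding K_def by force
  qed
  ultimately have "compact (K \<inter> cball 0 1)" by (intro compact_Int_closed) auto
  moreover have "K \<inter> cball 0 1 = cball 0 1" using \<open>cball 0 1 \<subseteq> K\<close> by blast
  ultimately show ?thesis by simp
qed

lemma compact_box: "compact {z :: key \<Rightarrow> complex. \<forall>k. cmod (z k) \<le> 1}"
proof -
  have e: "{z :: key \<Rightarrow> complex. \<forall>k. cmod (z k) \<le> 1} = PiE UNIV (\<lambda>_. cball 0 1)"
    by (auto simp: PiE_UNIV_domain)
  have "compactin (product_topology (\<lambda>_. euclidean) UNIV) (PiE UNIV (\<lambda>_::key. cball (0::complex) 1))"
  proof (subst compactin_PiE, intro disjI2 ballI)
    show "compactin euclidean (cball (0::complex) 1)" for i :: key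
      using compact_cball_complex by simp
  qed
  thus ?thesis unfolding e euclidean_product_topology by simp
qed

lemma closed_imp_const: "closed {z. P z} \<Longrightarrow> closed {z. Q \<longrightarrow> P z}"
  by (cases Q) auto

lemma Uz_carrier[simp]: "Uz d z i \<in> carrier_mat d d" unfolding Uz_def by simp
lemma Pz_carrier[simp]: "Pz n t z \<in> carrier_mat n n" unfolding Pz_def by simp

lemma eq_one_iff: "A \<in> carrier_mat n n \<Longrightarrow> A = 1\<^sub>m n \<longleftrightarrow> (\<forall>a b. a < n \<longrightarrow> b < n \<longrightarrow> A $$ (a,b) = (if a = b then 1 else (0::complex)))"
  by (auto intro!: eq_matI)

lemma unitary_Uz_iff: "unitary_mat d (Uz d z i) \<longleftrightarrow>
   (\<forall>a b. a < d \<longrightarrow> b < d \<longrightarrow> (\<Sum>k<d. cnj (z (1,i,k,a)) * z (1,i,k,b)) = (if a = b then 1 else 0)) \<and>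
   (\<forall>a b. a < d \<longrightarrow> b < d \<longrightarrow> (\<Sum>k<d. z (1,i,a,k) * cnj (z (1,i,b,k))) = (if a = b then 1 else 0))"
proof -
  have e1: "(adj (Uz d z i) * Uz d z i) $$ (a,b) = (\<Sum>k<d. cnj (z (1,i,k,a)) * z (1,i,k,b))" if "a < d" "b < d" for a b
    using that by (subst mm_entry[OF adj_carrier[OF Uz_carrier] Uz_carrier]) (auto simp: Uz_def intro!: sum.cong)
  have e2: "(Uz d z i * adj (Uz d z i)) $$ (a,b) = (\<Sum>k<d. z (1,i,a,k) * cnj (z (1,i,b,k)))" if "a < d" "b < d" for a b
    using that by (subst mm_entry[OF Uz_carrier adj_carrier[OF Uz_carrier]]) (auto simp: Uz_def intro!: sum.cong)
  have u1: "(adj (Uz d z i) * Uz d z i = 1\<^sub>m d) = (\<forall>a b. a < d \<longrightarrow> b < d \<longrightarrow> (\<Sum>k<d. cnj (z (1,i,k,a)) * z (1,i,k,b)) = (if a = b then 1 else 0))"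
    unfolding eq_one_iff[OF mult_carrier_mat[OF adj_carrier[OF Uz_carrier] Uz_carrier]]
    using e1 by (auto simp del: index_mult_mat)
  have u2: "(Uz d z i * adj (Uz d z i) = 1\<^sub>m d) = (\<forall>a b. a < d \<longrightarrow> b < d \<longrightarrow> (\<Sum>k<d. z (1,i,a,k) * cnj (z (1,i,b,k))) = (if a = b then 1 else 0))"
    unfolding eq_one_iff[OF mult_carrier_mat[OF Uz_carrier adj_carrier[OF Uz_carrier]]]
    using e2 by (auto simp del: index_mult_mat)
  show ?thesis unfolding unitary_mat_def u1 u2 by simp
qed

lemma Qf_Pz: "w \<in> carrier_vec n \<Longrightarrow> Qf (Pz n t z) w = (\<Sum>a<n. cnj (w $ a) * (\<Sum>b<n. z (t,0,a,b) * w $ b))"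
proof -
  assume w: "w \<in> carrier_vec n"
  show ?thesis unfolding Qf_def
  proof (rule sum.cong)
    show "{..<dim_vec w} = {..<n}" using w by simp
    fix a assume a: "a \<in> {..<n}"
    show "cnj (w $ a) * (Pz n t z *\<^sub>v w) $ a = cnj (w $ a) * (\<Sum>b<n. z (t,0,a,b) * w $ b)"
      using a by (subst mv_entry[OF Pz_carrier w]) (auto simp: Pz_def intro!: sum.cong)
  qed
qed

lemma povm_Pz_iff: "povm2 n (Pz n 2 z) (Pz n 3 z) \<longleftrightarrow>
   (\<forall>w. w \<in> carrier_vec n \<longrightarrow> Im (\<Sum>a<n. cnj (w $ a) * (\<Sum>b<n. z (2,0,a,b) * w $ b)) = 0) \<and>
   (\<forall>w. w \<in> carrier_vec n \<longrightarrow> Re (\<Sum>a<n. cnj (w $ a) * (\<Sum>b<n. z (2,0,a,b) * w $ b)) \<ge> 0) \<and>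
   (\<forall>w. w \<in> carrier_vec n \<longrightarrow> Im (\<Sum>a<n. cnj (w $ a) * (\<Sum>b<n. z (3,0,a,b) * w $ b)) = 0) \<and>
   (\<forall>w. w \<in> carrier_vec n \<longrightarrow> Re (\<Sum>a<n. cnj (w $ a) * (\<Sum>b<n. z (3,0,a,b) * w $ b)) \<ge> 0) \<and>
   (\<forall>a b. a < n \<longrightarrow> b < n \<longrightarrow> z (2,0,a,b) + z (3,0,a,b) = (if a = b then 1 else 0))"
proof -
  have eqm: "Pz n 2 z + Pz n 3 z = 1\<^sub>m n \<longleftrightarrow> (\<forall>a b. a < n \<longrightarrow> b < n \<longrightarrow> z (2,0,a,b) + z (3,0,a,b) = (if a = b then 1 else 0))"
  proof -
    have C: "Pz n 2 z + Pz n 3 z \<in> carrier_mat n n" by (simp add: Pz_def)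
    show ?thesis unfolding eq_one_iff[OF C] by (auto simp: Pz_def)
  qed
  show ?thesis unfolding povm2_def psd_Qf eqm using Qf_Pz by auto
qed

lemma closed_F: "closed {z. (\<forall>i<N. Im (z (0,i,0,0)) = 0 \<and> Re (z (0,i,0,0)) \<ge> 0)
     \<and> (\<Sum>i<N. Re (z (0,i,0,0))) = 1 \<and> (\<forall>i<N. unitary_mat d (Uz d z i))
     \<and> povm2 (N*d) (Pz (N*d) 2 z) (Pz (N*d) 3 z)}"
  unfolding unitary_Uz_iff povm_Pz_iff
  by (intro closed_Collect_conj closed_Collect_all closed_imp_const closed_Collect_eq closed_Collect_le
      continuous_intros)

lemma compact_Fset: "compact (Fset N d)"
proof -
  have "Fset N d = {z :: key \<Rightarrow> complex. \<forall>k. cmod (z k) \<le> 1} \<inter> {z. (\<forall>i<N. Im (z (0,i,0,0)) = 0 \<and> Re (z (0,i,0,0)) \<ge> 0)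
     \<and> (\<Sum>i<N. Re (z (0,i,0,0))) = 1 \<and> (\<forall>i<N. unitary_mat d (Uz d z i))
     \<and> povm2 (N*d) (Pz (N*d) 2 z) (Pz (N*d) 3 z)}"
    unfolding Fset_def by blast
  thus ?thesis using compact_box closed_F by (simp add: compact_Int_closed)
qed

lemma adj_one: "adj (1\<^sub>m n) = (1\<^sub>m n :: complex mat)"
  by (rule eq_matI) auto

lemma unitary_one: "unitary_mat d (1\<^sub>m d)"
  unfolding unitary_mat_def adj_one by simp

lemma psd_one: "psd n (1\<^sub>m n)"
  unfolding psd_Qf using Qf_one nrm2_nonneg by auto

lemma psd_zero: "psd n (0\<^sub>m n n)"
proof -
  have "Qf (0\<^sub>m n n) w = 0" if "w \<in> carrier_vec n" for w
    unfolding Qf_def using that by (intro sum.neutral) auto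
  thus ?thesis unfolding psd_Qf by auto
qed

lemma povm_triv: "povm2 n (1\<^sub>m n) (0\<^sub>m n n)"
  unfolding povm2_def using psd_one psd_zero by auto

lemma psd_proj:
  assumes y: "y \<in> carrier_vec n"
  shows "psd n (proj y)"
  unfolding psd_Qf
proof (intro conjI ballI)
  show "proj y \<in> carrier_mat n n" using y by simp
  fix w :: "complex Matrix.vec" assume w: "w \<in> carrier_vec n"
  define \<beta> where "\<beta> = (\<Sum>j<n. cnj (y $ j) * w $ j)"
  have mv: "(proj y *\<^sub>v w) $ i = y $ i * \<beta>" if i: "i < n" for i
    unfolding mv_entry[OF proj_carrier[OF y] w i] \<beta>_def sum_distrib_left
    using y i by (intro sum.cong) (auto simp: proj_def)
  have "Qf (proj y) w = (\<Sum>i<n. cnj (w $ i) * y $ i) * \<beta>"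
    unfolding Qf_def sum_distrib_right using w by (intro sum.cong) (auto simp: mv)
  also have "(\<Sum>i<n. cnj (w $ i) * y $ i) = cnj \<beta>"
    unfolding \<beta>_def cnj_sum by (intro sum.cong) auto
  finally have "Qf (proj y) w = \<beta> * cnj \<beta>" by (simp add: mult.commute)
  hence "Qf (proj y) w = of_real ((cmod \<beta>)\<^sup>2)" by (metis complex_norm_square)
  thus "Im (Qf (proj y) w) = 0" "Re (Qf (proj y) w) \<ge> 0" by simp_all
qed

lemma nrm2_prod_state:
  assumes d: "0 < d"
  shows "nrm2 (N*d) (prod_state N d p (unit_vec d 0)) = (\<Sum>i<N. \<bar>p i\<bar>)"
  unfolding nrm2_split
proof (intro sum.cong refl)
  fix i assume i: "i \<in> {..<N}"
  have "nrm2 d (blk d i (prod_state N d p (unit_vec d 0))) = (\<Sum>a<d. if a = 0 then \<bar>p i\<bar> else 0)"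
    unfolding nrm2_def using i by (intro sum.cong) (auto simp: prod_state_def idx_lt norm_mult power2_eq_square real_sqrt_mult_self)
  also have "\<dots> = \<bar>p i\<bar>" using d by (simp add: sum.delta)
  finally show "nrm2 d (blk d i (prod_state N d p (unit_vec d 0))) = \<bar>p i\<bar>" .
qed

theorem lemma2:
  fixes N d :: nat and v :: "bool list \<Rightarrow> bool" and q :: "bool list \<Rightarrow> real"
  assumes "N \<ge> 1" and "d \<ge> 1"
    and "\<forall>x\<in>bitstrings N. q x \<ge> 0"
    and "(\<Sum>x\<in>bitstrings N. q x) = 1"
  shows "\<exists>p \<chi> U.
     (\<forall>i<N. p i \<ge> 0) \<and> (\<Sum>i<N. p i) = 1 \<and>
     \<chi> \<in> carrier_vec d \<and> (\<Sum>a<d. (cmod (\<chi> $ a))\<^sup>2) = 1 \<and>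
     (\<forall>i<N. unitary_mat d (U i)) \<and>
     (\<forall>\<rho> Us. density (N*d) \<rho> \<and> (\<forall>j<N. \<forall>b. unitary_mat d (Us j b)) \<longrightarrow>
        P_W N d v q \<rho> Us \<le>
        P_W N d v q (proj (prod_state N d p \<chi>)) (\<lambda>i b. if b then U i else 1\<^sub>m d))"
proof -
  have d: "0 < d" using assms(2) by simp
  have Nd: "0 < N*d" using assms(1,2) by simp
  define \<psi>0 where "\<psi>0 = (unit_vec (N*d) 0 :: complex Matrix.vec)"
  have \<psi>0c: "\<psi>0 \<in> carrier_vec (N*d)" unfolding \<psi>0_def by simp
  have n\<psi>0: "nrm2 (N*d) \<psi>0 = 1" unfolding \<psi>0_def by (rule nrm2_e0[OF Nd])
  obtain z0 where z0: "z0 \<in> Fset N d"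
    using pure_reduce[OF d \<psi>0c n\<psi>0 _ povm_triv, of "\<lambda>_ _. 1\<^sub>m d" v q] unitary_one by blast
  have cont: "continuous_on (Fset N d) (G N d v q)"
  proof -
    have "G N d v q = Gexp N d v q" using G_Gexp[OF d] by blast
    thus ?thesis using Gexp_cont by simp
  qed
  obtain zs where zs: "zs \<in> Fset N d" and zmax: "\<And>y. y \<in> Fset N d \<Longrightarrow> G N d v q y \<le> G N d v q zs"
    using continuous_attains_sup[OF compact_Fset _ cont] z0 by blast
  define M where "M = G N d v q zs"
  have Hpure: "win_prob N d v q (proj \<psi>) Us P0 P1 \<le> M"
    if hh: "\<psi> \<in> carrier_vec (N*d)" "nrm2 (N*d) \<psi> = 1" "\<forall>j<N. \<forall>b. unitary_mat d (Us j b)" "povm2 (N*d) P0 P1"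
    for \<psi> Us P0 P1
  proof -
    obtain z where "z \<in> Fset N d" "win_prob N d v q (proj \<psi>) Us P0 P1 = G N d v q z"
      using pure_reduce[OF d hh] by blast
    thus ?thesis using zmax unfolding M_def by simp
  qed
  have Hmix: "win_prob N d v q \<rho> Us P0 P1 \<le> M * Re (tr \<rho>)"
    if \<rho>: "psd (N*d) \<rho>" and U: "\<forall>j<N. \<forall>b. unitary_mat d (Us j b)" and P: "povm2 (N*d) P0 P1"
    for \<rho> Us P0 P1
  proof -
    have PC: "P0 \<in> carrier_mat (N*d) (N*d)" "P1 \<in> carrier_mat (N*d) (N*d)" using povm_carrier[OF P] by auto
    show ?thesis
    proof (rule abstract_mixed[where L="\<lambda>\<rho>. win_prob N d v q \<rho> Us P0 P1", OF _ _ _ \<rho>])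
      show "win_prob N d v q (A + B) Us P0 P1 = win_prob N d v q A Us P0 P1 + win_prob N d v q B Us P0 P1"
        if "A \<in> carrier_mat (N*d) (N*d)" "B \<in> carrier_mat (N*d) (N*d)" for A B
        by (rule wp_add[OF that PC])
      show "win_prob N d v q (of_real c \<cdot>\<^sub>m A) Us P0 P1 = c * win_prob N d v q A Us P0 P1"
        if "A \<in> carrier_mat (N*d) (N*d)" for A c
        by (rule wp_smult[OF that PC])
      show "win_prob N d v q (proj \<psi>) Us P0 P1 \<le> M * nrm2 (N*d) \<psi>" if "\<psi> \<in> carrier_vec (N*d)" for \<psi>
        by (rule pure_any[OF that PC]) (rule Hpure[OF _ _ U P])
    qed
  qed
  have zsF: "(\<forall>i<N. Im (zs (0,i,0,0)) = 0 \<and> Re (zs (0,i,0,0)) \<ge> 0)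
     \<and> (\<Sum>i<N. Re (zs (0,i,0,0))) = 1 \<and> (\<forall>i<N. unitary_mat d (Uz d zs i))
     \<and> povm2 (N*d) (Pz (N*d) 2 zs) (Pz (N*d) 3 zs)" using zs unfolding Fset_def by blast
  define p where "p = pz zs"
  define \<chi> where "\<chi> = (unit_vec d 0 :: complex Matrix.vec)"
  define U where "U = Uz d zs"
  define Ut where "Ut = (\<lambda>i b. if b then U i else 1\<^sub>m d)"
  define \<rho>t where "\<rho>t = proj (prod_state N d p \<chi>)"
  have p0: "\<forall>i<N. p i \<ge> 0" using zsF unfolding p_def pz_def by blast
  have ps: "(\<Sum>i<N. p i) = 1" using zsF unfolding p_def pz_def by blast
  have Uu: "\<forall>i<N. unitary_mat d (U i)" using zsF unfolding U_def by blast
  have Utu: "\<forall>j<N. \<forall>b. unitary_mat d (Ut j b)" using Uu unitary_one unfolding Ut_def by auto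
  have \<chi>n: "(\<Sum>a<d. (cmod (\<chi> $ a))\<^sup>2) = 1" using nrm2_e0[OF d] unfolding nrm2_def \<chi>_def .
  have tc: "prod_state N d p \<chi> \<in> carrier_vec (N*d)" unfolding prod_state_def by simp
  have \<rho>tpsd: "psd (N*d) \<rho>t" unfolding \<rho>t_def by (rule psd_proj[OF tc])
  have \<rho>ttr: "Re (tr \<rho>t) = 1"
  proof -
    have "(\<Sum>i<N. \<bar>p i\<bar>) = 1" using ps p0 by simp
    moreover have "tr \<rho>t = of_real (nrm2 (N*d) (prod_state N d p \<chi>))"
      unfolding \<rho>t_def by (rule tr_proj[OF tc])
    ultimately show ?thesis unfolding \<chi>_def nrm2_prod_state[OF d] by simp
  qed
  have MS: "M = win_prob N d v q \<rho>t Ut (Pz (N*d) 2 zs) (Pz (N*d) 3 zs)"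
    unfolding M_def G_def \<rho>t_def Ut_def p_def \<chi>_def U_def ..
  have upper: "P_W N d v q \<rho> Us \<le> M" if \<rho>: "density (N*d) \<rho>" and Uv: "\<forall>j<N. \<forall>b. unitary_mat d (Us j b)" for \<rho> Us
    unfolding P_W_def
  proof (rule cSup_least)
    show "{win_prob N d v q \<rho> Us P0 P1 |P0 P1. povm2 (N * d) P0 P1} \<noteq> {}" using povm_triv by blast
    fix x assume "x \<in> {win_prob N d v q \<rho> Us P0 P1 |P0 P1. povm2 (N * d) P0 P1}"
    then obtain P0 P1 where P: "povm2 (N*d) P0 P1" and x: "x = win_prob N d v q \<rho> Us P0 P1" by blast
    have "tr \<rho> = 1" using \<rho> density_def by blast
    thus "x \<le> M" using Hmix[of \<rho> Us P0 P1] \<rho> Uv P x density_def by simp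
  qed
  have lower: "M \<le> P_W N d v q \<rho>t Ut"
    unfolding P_W_def
  proof (rule cSup_upper)
    show "M \<in> {win_prob N d v q \<rho>t Ut P0 P1 |P0 P1. povm2 (N * d) P0 P1}" using MS zsF by blast
    show "bdd_above {win_prob N d v q \<rho>t Ut P0 P1 |P0 P1. povm2 (N * d) P0 P1}"
    proof (rule bdd_aboveI)
      fix x assume "x \<in> {win_prob N d v q \<rho>t Ut P0 P1 |P0 P1. povm2 (N * d) P0 P1}"
      then obtain P0 P1 where P: "povm2 (N*d) P0 P1" and x: "x = win_prob N d v q \<rho>t Ut P0 P1" by blast
      show "x \<le> M" using Hmix[OF \<rho>tpsd Utu P] \<rho>ttr x by simp
    qed
  qed
  show ?thesis
  proof (rule exI[of _ p], rule exI[of _ \<chi>], rule exI[of _ U], intro conjI)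
    show "\<forall>i<N. p i \<ge> 0" by (rule p0)
    show "(\<Sum>i<N. p i) = 1" by (rule ps)
    show "\<chi> \<in> carrier_vec d" unfolding \<chi>_def by simp
    show "(\<Sum>a<d. (cmod (\<chi> $ a))\<^sup>2) = 1" by (rule \<chi>n)
    show "\<forall>i<N. unitary_mat d (U i)" by (rule Uu)
    show "\<forall>\<rho> Us. density (N*d) \<rho> \<and> (\<forall>j<N. \<forall>b. unitary_mat d (Us j b)) \<longrightarrow>
        P_W N d v q \<rho> Us \<le> P_W N d v q (proj (prod_state N d p \<chi>)) (\<lambda>i b. if b then U i else 1\<^sub>m d)"
    proof (intro allI impI)
      fix \<rho> and Us :: "nat \<Rightarrow> bool \<Rightarrow> complex mat" assume h: "density (N*d) \<rho> \<and> (\<forall>j<N. \<forall>b. unitary_mat d (Us j b))"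
      show "P_W N d v q \<rho> Us \<le> P_W N d v q (proj (prod_state N d p \<chi>)) (\<lambda>i b. if b then U i else 1\<^sub>m d)"
      proof -
        have "P_W N d v q \<rho> Us \<le> M" using upper[of \<rho> Us] h by blast
        thus ?thesis using lower unfolding \<rho>t_def Ut_def by linarith
      qed
    qed
  qed
qed


end
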